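(* If the gapless condition (C) is not imposed, there is a series of instances, all on one fixed bipartite graph $G$ (with choice functions satisfying (A1)–(A3)), such that the weighted rotational posets $(\mathcal U,\tau,\triangleleft)$ representing the lattices of stable g-matchings have pseudo-polynomial sizes, namely $|\mathcal U|$ proportional to $b^{\max}=\max_e b(e)$, with $b^{\max}$ arbitrarily large.
   Context: An instance consists of a finite bipartite graph $G=(V,E)$ with color classes $W$ and $F$ (edge joining $w\in W$, $f\in F$ written $wf$), capacities $b\in\mathbb Z_+^E$, and for each $v\in V$ a choice function $C_v:\mathcal B_v\to\mathcal B_v$, where $E_v$ is the set of edges at $v$ and $\mathcal B_v=\{z\in\mathbb Z_+^{E_v}:z\le b|_{E_v}\}$, with $C_v(z)\le z$ and, for all $z,z'$: (A1) $z\ge z'\ge C_v(z)\Rightarrow C_v(z')=C_v(z)$; (A2) $z\ge z'\Rightarrow C_v(z)\wedge z'\le C_v(z')$; (A3) $z\ge z'\Rightarrow|C_v(z)|\ge|C_v(z')|$ ($\wedge$ = componentwise min, $|z|=\sum_e|z(e)|$, $\mathbf 1^e$ unit vector). $z$ is acceptable if $C_v(z)=z$; for distinct acceptable $z,z'$, $z'\prec_v z$ iff $C_v(z\vee z')=z$. A g-matching is $x\in\mathbb Z_+^E$, $x\le b$, with each restriction $x_v$ acceptable; $x\prec_F y$ (distinct) iff $x_f\preceq_f y_f$ for all $f\in F$. $e\in E_v$ is interesting for $v$ under acceptable $z$ if some $z'\in\mathcal B_v$ has $z'(e)>z(e)$, $z'(e')=z(e')$ for $e'\ne e$, $C_v(z')(e)>z(e)$;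 $e=wf$ blocks $x$ if interesting for $w$ under $x_w$ and for $f$ under $x_f$; stable g-matchings (no blocking edge) form a finite distributive lattice $\mathcal S$ under $\prec_F$ with minimum $x^{\min}$, maximum $x^{\max}$. Rotations at $x\in\mathcal S$: $U_F^+(x)$ = edges $wf$ interesting for $f$ under $x_f$; $U_F^-(x)$ = edges $wf$ with $x(wf)>0$ not interesting for $f$. Legal $f$-pair $(a,c)$: $a\in U_F^+(x)\cap E_f$, $c\in E_f\setminus\{a\}$, $C_f(x_f+\mathbf 1^a)=x_f+\mathbf 1^a-\mathbf 1^c$. Legal $w$-pair $(c,a)$: $c\in U_F^-(x)\cap E_w$, $a\in U_F^+(x)\cap E_w$, $x_w+\mathbf 1^a-\mathbf 1^c$ acceptable; essential if no $d\in(U_F^+(x)\cap E_w)\setminus\{a\}$ is interesting for $w$ under $x_w+\mathbf 1^a-\mathbf 1^c$. Digraph with vertices $w^e,f^e$ ($e=wf\in U_F^+(x)\cup U_F^-(x)$) and arcs $(w^a,f^a)$, $(f^c,w^c)$, $(f^a,f^c)$ for legal $f$-pairs, $(w^c,w^a)$ for essential $w$-pairs; after repeatedly deleting vertices with no entering arc, each directed cycle gives a rotation $R\in\mathcal R(x)$, a cyclic sequence $(a_1,c_1,\dots,a_k,c_k)$ of distinct edges with $\chi^R$ equal to $1$ on the $a_i$, $-1$ on the $c_i$. $\tau_R(x)$ is the maximum $\lambda$ with $x+i\chi^R\in\mathcal S$ for $i=1,\dots,\lambda$. A full route is $x^{\min}=x_0,\dots,x_N=x^{\max}$ with $x_i=x_{i-1}+\tau_{R_i}(x_{i-1})\chi^{R_i}$,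 $R_i\in\mathcal R(x_{i-1})$. The poset $\mathcal U$ consists of the labeled occurrences $R^{(j)}$ ($j$-th occurrence of rotation $R$ in a full route), weighted by the weights $\tau$ with which they are applied and ordered by $R_\alpha^{(i)}\triangleleft R_\beta^{(j)}$ iff in every full route the $i$-th occurrence of $R_\alpha$ precedes the $j$-th occurrence of $R_\beta$. Gapless condition (C) for $v$: if acceptable $z^1,z^2,z^3$ and edges $a,c^1,c^2,c^3\in E_v$ satisfy $z^1\prec_v z^2\prec_v z^3$, $C_v(z^i+\mathbf 1^a)=z^i+\mathbf 1^a-\mathbf 1^{c^i}$ ($i=1,2,3$), and $c^1=c^3$, then $c^1=c^2$. *)

theory Defs
  imports Complex_Main
begin

text \<open>Vectors on edges are functions from edges to nat; a vector at vertex v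
is supported on the edge set Ev of v (zero elsewhere).\<close>

definition vbox :: "'e set \<Rightarrow> ('e \<Rightarrow> nat) \<Rightarrow> ('e \<Rightarrow> nat) set" where
  "vbox Ev b = {z. (\<forall>e\<in>Ev. z e \<le> b e) \<and> (\<forall>e. e \<notin> Ev \<longrightarrow> z e = 0)}"

definition vnorm :: "'e set \<Rightarrow> ('e \<Rightarrow> nat) \<Rightarrow> nat" where
  "vnorm Ev z = (\<Sum>e\<in>Ev. z e)"

text \<open>C maps B_v to B_v, C z \<le> z, and axioms (A1),(A2),(A3).\<close>
definition choice_axioms ::
  "'e set \<Rightarrow> ('e \<Rightarrow> nat) \<Rightarrow> (('e \<Rightarrow> nat) \<Rightarrow> ('e \<Rightarrow> nat)) \<Rightarrow> bool" where
  "choice_axioms Ev b C \<longleftrightarrow>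
     (\<forall>z\<in>vbox Ev b. C z \<in> vbox Ev b \<and> C z \<le> z) \<and>
     (\<forall>z\<in>vbox Ev b. \<forall>z'\<in>vbox Ev b. z' \<le> z \<longrightarrow>
        ((C z \<le> z' \<longrightarrow> C z' = C z) \<and>
         inf (C z) z' \<le> C z' \<and>
         vnorm Ev (C z') \<le> vnorm Ev (C z)))"

definition acceptable ::
  "'e set \<Rightarrow> ('e \<Rightarrow> nat) \<Rightarrow> (('e \<Rightarrow> nat) \<Rightarrow> ('e \<Rightarrow> nat)) \<Rightarrow> ('e \<Rightarrow> nat) \<Rightarrow> bool" where
  "acceptable Ev b C z \<longleftrightarrow> z \<in> vbox Ev b \<and> C z = z"

text \<open>vprec Ev b C z' z  means  z' \<prec>_v z.\<close>
definition vprec ::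
  "'e set \<Rightarrow> ('e \<Rightarrow> nat) \<Rightarrow> (('e \<Rightarrow> nat) \<Rightarrow> ('e \<Rightarrow> nat)) \<Rightarrow> ('e \<Rightarrow> nat) \<Rightarrow> ('e \<Rightarrow> nat) \<Rightarrow> bool" where
  "vprec Ev b C z' z \<longleftrightarrow> acceptable Ev b C z \<and> acceptable Ev b C z' \<and> z \<noteq> z' \<and> C (sup z z') = z"

definition vpreceq ::
  "'e set \<Rightarrow> ('e \<Rightarrow> nat) \<Rightarrow> (('e \<Rightarrow> nat) \<Rightarrow> ('e \<Rightarrow> nat)) \<Rightarrow> ('e \<Rightarrow> nat) \<Rightarrow> ('e \<Rightarrow> nat) \<Rightarrow> bool" where
  "vpreceq Ev b C z' z \<longleftrightarrow> z' = z \<or> vprec Ev b C z' z"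

definition interesting ::
  "'e set \<Rightarrow> ('e \<Rightarrow> nat) \<Rightarrow> (('e \<Rightarrow> nat) \<Rightarrow> ('e \<Rightarrow> nat)) \<Rightarrow> ('e \<Rightarrow> nat) \<Rightarrow> 'e \<Rightarrow> bool" where
  "interesting Ev b C z e \<longleftrightarrow> e \<in> Ev \<and>
     (\<exists>z'\<in>vbox Ev b. z' e > z e \<and> (\<forall>e'. e' \<noteq> e \<longrightarrow> z' e' = z e') \<and> C z' e > z e)"

definition unitv :: "'e \<Rightarrow> 'e \<Rightarrow> nat" where
  "unitv a = (\<lambda>e. if e = a then 1 else 0)"

definition restr :: "'e set \<Rightarrow> ('e \<Rightarrow> nat) \<Rightarrow> ('e \<Rightarrow> nat)" where
  "restr A x = (\<lambda>e. if e \<in> A then x e else 0)"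

record ('w, 'f) ginst =
  Wv :: "'w set"
  Fv :: "'f set"
  Ed :: "('w \<times> 'f) set"
  cap :: "('w \<times> 'f) \<Rightarrow> nat"
  chW :: "'w \<Rightarrow> (('w \<times> 'f) \<Rightarrow> nat) \<Rightarrow> (('w \<times> 'f) \<Rightarrow> nat)"
  chF :: "'f \<Rightarrow> (('w \<times> 'f) \<Rightarrow> nat) \<Rightarrow> (('w \<times> 'f) \<Rightarrow> nat)"

definition Ew :: "('w, 'f) ginst \<Rightarrow> 'w \<Rightarrow> ('w \<times> 'f) set" where
  "Ew I w = {e \<in> Ed I. fst e = w}"

definition Ef :: "('w, 'f) ginst \<Rightarrow> 'f \<Rightarrow> ('w \<times> 'f) set" where
  "Ef I f = {e \<in> Ed I. snd e = f}"

definition valid_instance :: "('w, 'f) ginst \<Rightarrow> bool" where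
  "valid_instance I \<longleftrightarrow> finite (Wv I) \<and> finite (Fv I) \<and> Ed I \<subseteq> Wv I \<times> Fv I \<and>
     (\<forall>w\<in>Wv I. choice_axioms (Ew I w) (cap I) (chW I w)) \<and>
     (\<forall>f\<in>Fv I. choice_axioms (Ef I f) (cap I) (chF I f))"

definition bmax :: "('w, 'f) ginst \<Rightarrow> nat" where
  "bmax I = Max (cap I ` Ed I)"

definition gmatching :: "('w, 'f) ginst \<Rightarrow> (('w \<times> 'f) \<Rightarrow> nat) \<Rightarrow> bool" where
  "gmatching I x \<longleftrightarrow> (\<forall>e. e \<notin> Ed I \<longrightarrow> x e = 0) \<and> (\<forall>e\<in>Ed I. x e \<le> cap I e) \<and>
     (\<forall>w\<in>Wv I. acceptable (Ew I w) (cap I) (chW I w) (restr (Ew I w) x)) \<and>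
     (\<forall>f\<in>Fv I. acceptable (Ef I f) (cap I) (chF I f) (restr (Ef I f) x))"

definition interesting_w :: "('w, 'f) ginst \<Rightarrow> (('w \<times> 'f) \<Rightarrow> nat) \<Rightarrow> ('w \<times> 'f) \<Rightarrow> bool" where
  "interesting_w I z e = interesting (Ew I (fst e)) (cap I) (chW I (fst e)) (restr (Ew I (fst e)) z) e"

definition interesting_f :: "('w, 'f) ginst \<Rightarrow> (('w \<times> 'f) \<Rightarrow> nat) \<Rightarrow> ('w \<times> 'f) \<Rightarrow> bool" where
  "interesting_f I z e = interesting (Ef I (snd e)) (cap I) (chF I (snd e)) (restr (Ef I (snd e)) z) e"

definition blocking :: "('w, 'f) ginst \<Rightarrow> (('w \<times> 'f) \<Rightarrow> nat) \<Rightarrow> ('w \<times> 'f) \<Rightarrow> bool" where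
  "blocking I x e \<longleftrightarrow> e \<in> Ed I \<and> interesting_w I x e \<and> interesting_f I x e"

definition stable :: "('w, 'f) ginst \<Rightarrow> (('w \<times> 'f) \<Rightarrow> nat) \<Rightarrow> bool" where
  "stable I x \<longleftrightarrow> gmatching I x \<and> \<not> (\<exists>e. blocking I x e)"

definition precF_eq :: "('w, 'f) ginst \<Rightarrow> (('w \<times> 'f) \<Rightarrow> nat) \<Rightarrow> (('w \<times> 'f) \<Rightarrow> nat) \<Rightarrow> bool" where
  "precF_eq I x y \<longleftrightarrow> x = y \<or>
     (\<forall>f\<in>Fv I. vpreceq (Ef I f) (cap I) (chF I f) (restr (Ef I f) x) (restr (Ef I f) y))"

definition is_xmin :: "('w, 'f) ginst \<Rightarrow> (('w \<times> 'f) \<Rightarrow> nat) \<Rightarrow> bool" where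
  "is_xmin I x \<longleftrightarrow> stable I x \<and> (\<forall>y. stable I y \<longrightarrow> precF_eq I x y)"

definition is_xmax :: "('w, 'f) ginst \<Rightarrow> (('w \<times> 'f) \<Rightarrow> nat) \<Rightarrow> bool" where
  "is_xmax I x \<longleftrightarrow> stable I x \<and> (\<forall>y. stable I y \<longrightarrow> precF_eq I y x)"

definition Uplus :: "('w, 'f) ginst \<Rightarrow> (('w \<times> 'f) \<Rightarrow> nat) \<Rightarrow> ('w \<times> 'f) set" where
  "Uplus I x = {e \<in> Ed I. interesting_f I x e}"

definition Uminus :: "('w, 'f) ginst \<Rightarrow> (('w \<times> 'f) \<Rightarrow> nat) \<Rightarrow> ('w \<times> 'f) set" where
  "Uminus I x = {e \<in> Ed I. 0 < x e \<and> \<not> interesting_f I x e}"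

definition legal_fpair :: "('w, 'f) ginst \<Rightarrow> (('w \<times> 'f) \<Rightarrow> nat) \<Rightarrow> ('w \<times> 'f) \<Rightarrow> ('w \<times> 'f) \<Rightarrow> bool" where
  "legal_fpair I x a c \<longleftrightarrow>
     a \<in> Uplus I x \<and> c \<in> Ef I (snd a) \<and> c \<noteq> a \<and>
     (\<forall>e. int (chF I (snd a) (\<lambda>e'. restr (Ef I (snd a)) x e' + unitv a e') e)
          = int (restr (Ef I (snd a)) x e) + int (unitv a e) - int (unitv c e))"

text \<open>Legal w-pair (c,a) for w = fst c (here x(c) > 0 and c \<noteq> a, so the
natural-number subtraction is exact).\<close>
definition legal_wpair :: "('w, 'f) ginst \<Rightarrow> (('w \<times> 'f) \<Rightarrow> nat) \<Rightarrow> ('w \<times> 'f) \<Rightarrow> ('w \<times> 'f) \<Rightarrow> bool" where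
  "legal_wpair I x c a \<longleftrightarrow>
     c \<in> Uminus I x \<and> a \<in> Uplus I x \<and> fst a = fst c \<and>
     acceptable (Ew I (fst c)) (cap I) (chW I (fst c))
       (\<lambda>e. restr (Ew I (fst c)) x e + unitv a e - unitv c e)"

definition essential_wpair :: "('w, 'f) ginst \<Rightarrow> (('w \<times> 'f) \<Rightarrow> nat) \<Rightarrow> ('w \<times> 'f) \<Rightarrow> ('w \<times> 'f) \<Rightarrow> bool" where
  "essential_wpair I x c a \<longleftrightarrow> legal_wpair I x c a \<and>
     \<not> (\<exists>d \<in> Uplus I x. fst d = fst c \<and> d \<noteq> a \<and>
          interesting (Ew I (fst c)) (cap I) (chW I (fst c))
            (\<lambda>e. restr (Ew I (fst c)) x e + unitv a e - unitv c e) d)"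

text \<open>Vertices w^e and f^e of the auxiliary digraph.\<close>
datatype 'e rvert = WV 'e | FV 'e

definition rverts :: "('w, 'f) ginst \<Rightarrow> (('w \<times> 'f) \<Rightarrow> nat) \<Rightarrow> ('w \<times> 'f) rvert set" where
  "rverts I x = WV ` (Uplus I x \<union> Uminus I x) \<union> FV ` (Uplus I x \<union> Uminus I x)"

definition rarc :: "('w, 'f) ginst \<Rightarrow> (('w \<times> 'f) \<Rightarrow> nat) \<Rightarrow> ('w \<times> 'f) rvert \<Rightarrow> ('w \<times> 'f) rvert \<Rightarrow> bool" where
  "rarc I x u v \<longleftrightarrow> u \<in> rverts I x \<and> v \<in> rverts I x \<and>
     ((\<exists>a\<in>Uplus I x. u = WV a \<and> v = FV a) \<or>
      (\<exists>c\<in>Uminus I x. u = FV c \<and> v = WV c) \<or>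
      (\<exists>a c. legal_fpair I x a c \<and> u = FV a \<and> v = FV c) \<or>
      (\<exists>c a. essential_wpair I x c a \<and> u = WV c \<and> v = WV a))"

text \<open>A rotation at a stable x: a cyclic sequence (a_1,c_1,...,a_k,c_k) of
distinct edges (stored as the list of pairs (a_i,c_i)) such that
w^{a_1} f^{a_1} f^{c_1} w^{c_1} w^{a_2} ... w^{c_k} w^{a_1} is a directed
cycle of the digraph (such cycles survive the pruning of vertices without
entering arcs).\<close>
definition is_rotation :: "('w, 'f) ginst \<Rightarrow> (('w \<times> 'f) \<Rightarrow> nat) \<Rightarrow> (('w \<times> 'f) \<times> ('w \<times> 'f)) list \<Rightarrow> bool" where
  "is_rotation I x R \<longleftrightarrow> stable I x \<and> R \<noteq> [] \<and>
     distinct (concat (map (\<lambda>(a, c). [a, c]) R)) \<and>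
     (\<forall>i < length R.
        rarc I x (WV (fst (R ! i))) (FV (fst (R ! i))) \<and>
        rarc I x (FV (fst (R ! i))) (FV (snd (R ! i))) \<and>
        rarc I x (FV (snd (R ! i))) (WV (snd (R ! i))) \<and>
        rarc I x (WV (snd (R ! i))) (WV (fst (R ! (Suc i mod length R)))))"

definition chi :: "(('w \<times> 'f) \<times> ('w \<times> 'f)) list \<Rightarrow> ('w \<times> 'f) \<Rightarrow> int" where
  "chi R e = (if e \<in> fst ` set R then 1 else if e \<in> snd ` set R then -1 else 0)"

definition shift_ok :: "('w, 'f) ginst \<Rightarrow> (('w \<times> 'f) \<Rightarrow> nat) \<Rightarrow> (('w \<times> 'f) \<times> ('w \<times> 'f)) list \<Rightarrow> nat \<Rightarrow> bool" where
  "shift_ok I x R i \<longleftrightarrow> (\<forall>e. 0 \<le> int (x e) + int i * chi R e) \<and>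
     stable I (\<lambda>e. nat (int (x e) + int i * chi R e))"

definition shifted :: "(('w \<times> 'f) \<Rightarrow> nat) \<Rightarrow> (('w \<times> 'f) \<times> ('w \<times> 'f)) list \<Rightarrow> nat \<Rightarrow> (('w \<times> 'f) \<Rightarrow> nat)" where
  "shifted x R i = (\<lambda>e. nat (int (x e) + int i * chi R e))"

definition tau :: "('w, 'f) ginst \<Rightarrow> (('w \<times> 'f) \<Rightarrow> nat) \<Rightarrow> (('w \<times> 'f) \<times> ('w \<times> 'f)) list \<Rightarrow> nat" where
  "tau I x R = (GREATEST l. \<forall>i \<in> {1..l}. shift_ok I x R i)"

definition full_route :: "('w, 'f) ginst \<Rightarrow> (('w \<times> 'f) \<Rightarrow> nat) list \<Rightarrow> (('w \<times> 'f) \<times> ('w \<times> 'f)) list list \<Rightarrow> bool" where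
  "full_route I xs Rs \<longleftrightarrow> length xs = Suc (length Rs) \<and>
     is_xmin I (xs ! 0) \<and> is_xmax I (last xs) \<and>
     (\<forall>i < length Rs. is_rotation I (xs ! i) (Rs ! i) \<and>
        xs ! Suc i = shifted (xs ! i) (Rs ! i) (tau I (xs ! i) (Rs ! i)))"

text \<open>A rotation is a cyclic sequence: identify lists up to cyclic shift.\<close>
definition rot_class :: "'a list \<Rightarrow> 'a list set" where
  "rot_class R = {rotate n R | n. True}"

text \<open>The ground set of the rotational poset: labelled occurrences R^(j),
the j-th occurrence of rotation R in a full route.\<close>
definition rot_poset :: "('w, 'f) ginst \<Rightarrow> ((('w \<times> 'f) \<times> ('w \<times> 'f)) list set \<times> nat) set" where
  "rot_poset I = {(rot_class R, j) | R j. \<exists>xs Rs. full_route I xs Rs \<and> 1 \<le> j \<and>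
      j \<le> card {i. i < length Rs \<and> rot_class (Rs ! i) = rot_class R}}"

end

theory Submission
  imports Defs
begin

definition prio2 :: "'e \<Rightarrow> 'e \<Rightarrow> nat \<Rightarrow> ('e \<Rightarrow> nat) \<Rightarrow> ('e \<Rightarrow> nat)" where
  "prio2 p q Q z = (\<lambda>e. if e = p then min (z p) Q else if e = q then min (z q) (Q - min (z p) Q) else 0)"

lemma le2: assumes "\<forall>e. e \<notin> {p,q} \<longrightarrow> f e = 0"
  shows "(f \<le> (g::'e\<Rightarrow>nat)) \<longleftrightarrow> f p \<le> g p \<and> f q \<le> g q"
proof
  assume "f \<le> g" then show "f p \<le> g p \<and> f q \<le> g q" by (simp add: le_fun_def)
next
  assume h: "f p \<le> g p \<and> f q \<le> g q"
  show "f \<le> g" unfolding le_fun_def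
  proof
    fix e show "f e \<le> g e" using h assms by (cases "e = p"; cases "e = q") auto
  qed
qed

lemma eq2: assumes "\<forall>e. e \<notin> {p,q} \<longrightarrow> f e = 0" "\<forall>e. e \<notin> {p,q} \<longrightarrow> g e = 0"
  shows "(f = (g::'e\<Rightarrow>nat)) \<longleftrightarrow> f p = g p \<and> f q = g q"
proof
  assume h: "f p = g p \<and> f q = g q"
  show "f = g"
  proof
    fix e show "f e = g e" using h assms by (cases "e = p"; cases "e = q") auto
  qed
qed simp

lemma vnorm2: "p \<noteq> q \<Longrightarrow> vnorm {p,q} z = z p + z q"
  by (simp add: vnorm_def)

lemma prio2_axioms: assumes "p \<noteq> q" shows "choice_axioms {p,q} b (prio2 p q Q)"
proof -
  have Z: "\<forall>e. e \<notin> {p,q} \<longrightarrow> prio2 p q Q z e = 0" for z by (simp add: prio2_def)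
  show ?thesis
  unfolding choice_axioms_def
  proof (intro conjI ballI impI)
    fix z assume z: "z \<in> vbox {p,q} b"
    then show "prio2 p q Q z \<in> vbox {p, q} b" using assms
      by (auto simp: vbox_def prio2_def)
    show "prio2 p q Q z \<le> z" using z assms
      by (subst le2[OF Z]) (auto simp: prio2_def)
  next
    fix z z' assume z: "z \<in> vbox {p,q} b" and z': "z' \<in> vbox {p,q} b" and le: "z' \<le> z"
    have zz: "\<forall>e. e \<notin> {p,q} \<longrightarrow> z e = 0" "\<forall>e. e \<notin> {p,q} \<longrightarrow> z' e = 0"
      using z z' by (auto simp: vbox_def)
    have l: "z' p \<le> z p" "z' q \<le> z q" using le by (auto simp: le_fun_def)
    show "prio2 p q Q z \<le> z' \<Longrightarrow> prio2 p q Q z' = prio2 p q Q z"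
      using l assms by (subst (asm) le2[OF Z], subst eq2[OF Z Z]) (auto simp: prio2_def min_def)
    have Zi: "\<forall>e. e \<notin> {p,q} \<longrightarrow> inf (prio2 p q Q z) z' e = 0" by (simp add: prio2_def inf_nat_def)
    show "inf (prio2 p q Q z) z' \<le> prio2 p q Q z'"
      using l assms by (subst le2[OF Zi]) (auto simp: prio2_def inf_nat_def min_def)
    show "vnorm {p, q} (prio2 p q Q z') \<le> vnorm {p, q} (prio2 p q Q z)"
      using l assms by (simp add: vnorm2 prio2_def)
  qed
qed

definition prio3 :: "'e \<Rightarrow> 'e \<Rightarrow> 'e \<Rightarrow> nat \<Rightarrow> ('e \<Rightarrow> nat) \<Rightarrow> ('e \<Rightarrow> nat)" where
  "prio3 p q s Q z = (\<lambda>e. if e = p then min (z p) Q else if e = q then min (z q) (Q - min (z p) Q)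
     else if e = s then min (z s) (Q - min (z p) Q - min (z q) (Q - min (z p) Q)) else 0)"

definition balq :: "nat \<Rightarrow> nat \<Rightarrow> nat \<Rightarrow> nat \<Rightarrow> nat" where
  "balq h g zq zs = (if zq + zs \<le> h + g then zq else if zq \<le> h then zq else if zs \<le> g then h + g - zs else h)"
definition bals :: "nat \<Rightarrow> nat \<Rightarrow> nat \<Rightarrow> nat \<Rightarrow> nat" where
  "bals h g zq zs = (if zq + zs \<le> h + g then zs else if zq \<le> h then h + g - zq else if zs \<le> g then zs else g)"

definition sp :: "'e \<Rightarrow> 'e \<Rightarrow> 'e \<Rightarrow> nat \<Rightarrow> ('e \<Rightarrow> nat) \<Rightarrow> ('e \<Rightarrow> nat)" where
  "sp p q s Q z = (\<lambda>e. if e = p then min (z p) Q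
     else if e = q then balq ((Q - min (z p) Q) div 2) (Q - min (z p) Q - (Q - min (z p) Q) div 2) (z q) (z s)
     else if e = s then bals ((Q - min (z p) Q) div 2) (Q - min (z p) Q - (Q - min (z p) Q) div 2) (z q) (z s) else 0)"

lemma le3: assumes "\<forall>e. e \<notin> {p,q,s} \<longrightarrow> f e = 0"
  shows "(f \<le> (g::'e\<Rightarrow>nat)) \<longleftrightarrow> f p \<le> g p \<and> f q \<le> g q \<and> f s \<le> g s"
proof
  assume "f \<le> g" then show "f p \<le> g p \<and> f q \<le> g q \<and> f s \<le> g s" by (simp add: le_fun_def)
next
  assume h: "f p \<le> g p \<and> f q \<le> g q \<and> f s \<le> g s"
  show "f \<le> g" unfolding le_fun_def
  proof
    fix e show "f e \<le> g e" using h assms by (cases "e = p"; cases "e = q"; cases "e = s") auto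
  qed
qed

lemma eq3: assumes "\<forall>e. e \<notin> {p,q,s} \<longrightarrow> f e = 0" "\<forall>e. e \<notin> {p,q,s} \<longrightarrow> g e = 0"
  shows "(f = (g::'e\<Rightarrow>nat)) \<longleftrightarrow> f p = g p \<and> f q = g q \<and> f s = g s"
proof
  assume h: "f p = g p \<and> f q = g q \<and> f s = g s"
  show "f = g"
  proof
    fix e show "f e = g e" using h assms by (cases "e = p"; cases "e = q"; cases "e = s") auto
  qed
qed simp

lemma vnorm3: "distinct [p,q,s] \<Longrightarrow> vnorm {p,q,s} z = z p + z q + z s"
  by (simp add: vnorm_def)

lemma m1: "(x'::nat) \<le> x \<Longrightarrow> min x Q \<le> x' \<Longrightarrow> min x' Q = min x Q" by (auto simp: min_def split: if_splits)
lemma m2: "(x'::nat) \<le> x \<Longrightarrow> Q \<le> Q' \<Longrightarrow> min (min x Q) x' \<le> min x' Q'" by (simp add: min_def)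
lemma m3: "min (x::nat) Q + min y (Q - min x Q) = min (x + y) Q" by (auto simp: min_def)
lemma m4: "(x'::nat) \<le> x \<Longrightarrow> Q - min x Q \<le> Q - min x' Q" by (auto simp: min_def)

lemma prio3_axioms: assumes "distinct [p,q,s]" shows "choice_axioms {p,q,s} b (prio3 p q s Q)"
proof -
  have Z: "\<forall>e. e \<notin> {p,q,s} \<longrightarrow> prio3 p q s Q z e = 0" for z by (simp add: prio3_def)
  have d: "p\<noteq>q" "q\<noteq>p" "p\<noteq>s" "s\<noteq>p" "q\<noteq>s" "s\<noteq>q" using assms by auto
  show ?thesis
  unfolding choice_axioms_def
  proof (intro conjI ballI impI)
    fix z assume z: "z \<in> vbox {p,q,s} b"
    then show "prio3 p q s Q z \<in> vbox {p,q,s} b" using assms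
      by (auto simp: vbox_def prio3_def)
    show "prio3 p q s Q z \<le> z" using z assms
      by (subst le3[OF Z]) (auto simp: prio3_def)
  next
    fix z z' assume z: "z \<in> vbox {p,q,s} b" and z': "z' \<in> vbox {p,q,s} b" and le: "z' \<le> z"
    have l: "z' p \<le> z p" "z' q \<le> z q" "z' s \<le> z s" using le by (auto simp: le_fun_def)
    show "prio3 p q s Q z \<le> z' \<Longrightarrow> prio3 p q s Q z' = prio3 p q s Q z"
    proof -
      assume h: "prio3 p q s Q z \<le> z'"
      have h1: "min (z p) Q \<le> z' p" "min (z q) (Q - min (z p) Q) \<le> z' q"
         "min (z s) (Q - min (z p) Q - min (z q) (Q - min (z p) Q)) \<le> z' s"
        using h assms le_funD[OF h, of p] le_funD[OF h, of q] le_funD[OF h, of s]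
        by (auto simp: prio3_def)
      have e1: "min (z' p) Q = min (z p) Q" using m1[OF l(1) h1(1)] .
      have e2: "min (z' q) (Q - min (z p) Q) = min (z q) (Q - min (z p) Q)" using m1[OF l(2) h1(2)] .
      have e3: "min (z' s) (Q - min (z p) Q - min (z q) (Q - min (z p) Q)) = min (z s) (Q - min (z p) Q - min (z q) (Q - min (z p) Q))"
        using m1[OF l(3) h1(3)] .
      show ?thesis unfolding prio3_def e1 e2 e3 by (rule refl)
    qed
    have Zi: "\<forall>e. e \<notin> {p,q,s} \<longrightarrow> inf (prio3 p q s Q z) z' e = 0" by (simp add: prio3_def inf_nat_def)
    have r1: "Q - min (z p) Q \<le> Q - min (z' p) Q" using m4[OF l(1)] .
    have r2: "Q - min (z p) Q - min (z q) (Q - min (z p) Q) \<le> Q - min (z' p) Q - min (z' q) (Q - min (z' p) Q)"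
      using m3[of "z p" Q "z q"] m3[of "z' p" Q "z' q"] m4[of "z' p + z' q" "z p + z q" Q] l
      by (simp add: diff_diff_left)
    have v: "prio3 p q s Q y p = min (y p) Q" "prio3 p q s Q y q = min (y q) (Q - min (y p) Q)"
      "prio3 p q s Q y s = min (y s) (Q - min (y p) Q - min (y q) (Q - min (y p) Q))" for y
      using d by (simp_all add: prio3_def)
    show "inf (prio3 p q s Q z) z' \<le> prio3 p q s Q z'"
      apply (subst le3[OF Zi])
      unfolding inf_fun_def inf_nat_def v by (intro conjI m2[OF l(1) order_refl] m2[OF l(2) r1] m2[OF l(3) r2])
    have t: "vnorm {p,q,s} (prio3 p q s Q y) = min (y p + y q + y s) Q" for y
    proof -
      have "vnorm {p,q,s} (prio3 p q s Q y) = (min (y p) Q + min (y q) (Q - min (y p) Q)) + min (y s) (Q - (min (y p) Q + min (y q) (Q - min (y p) Q)))"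
        using assms by (simp add: vnorm3 v diff_diff_left)
      also have "\<dots> = min (y p + y q) Q + min (y s) (Q - min (y p + y q) Q)" by (simp only: m3)
      also have "\<dots> = min (y p + y q + y s) Q" by (simp only: m3)
      finally show ?thesis .
    qed
    show "vnorm {p,q,s} (prio3 p q s Q z') \<le> vnorm {p,q,s} (prio3 p q s Q z)"
      unfolding t using l by simp
  qed
qed

lemma bal_le: "balq h g zq zs \<le> zq \<and> bals h g zq zs \<le> zs"
  unfolding balq_def bals_def by auto

lemma bal_sum: "balq h g zq zs + bals h g zq zs = min (zq + zs) (h + g)"
  unfolding balq_def bals_def by auto

lemma balA1: "zq' \<le> zq \<Longrightarrow> zs' \<le> zs \<Longrightarrow> balq h g zq zs \<le> zq' \<Longrightarrow> bals h g zq zs \<le> zs' \<Longrightarrow>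
   balq h g zq' zs' = balq h g zq zs \<and> bals h g zq' zs' = bals h g zq zs"
  unfolding balq_def bals_def by (auto split: if_splits)

lemma balA2: "zq' \<le> zq \<Longrightarrow> zs' \<le> zs \<Longrightarrow> h \<le> h' \<Longrightarrow> g \<le> g' \<Longrightarrow>
   min (balq h g zq zs) zq' \<le> balq h' g' zq' zs' \<and> min (bals h g zq zs) zs' \<le> bals h' g' zq' zs'"
  unfolding balq_def bals_def by (auto split: if_splits)

lemma hg_mono: "(r::nat) \<le> r' \<Longrightarrow> r - r div 2 \<le> r' - r' div 2" by presburger
lemma hg_sum: "(r::nat) div 2 + (r - r div 2) = r" by simp

lemma sp_axioms: assumes "distinct [p,q,s]" shows "choice_axioms {p,q,s} b (sp p q s Q)"
proof -
  have Z: "\<forall>e. e \<notin> {p,q,s} \<longrightarrow> sp p q s Q z e = 0" for z by (simp add: sp_def)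
  have d: "p\<noteq>q" "q\<noteq>p" "p\<noteq>s" "s\<noteq>p" "q\<noteq>s" "s\<noteq>q" using assms by auto
  define R where "R y = Q - min (y p) Q" for y :: "'a \<Rightarrow> nat"
  have v: "sp p q s Q y p = min (y p) Q" "sp p q s Q y q = balq (R y div 2) (R y - R y div 2) (y q) (y s)"
      "sp p q s Q y s = bals (R y div 2) (R y - R y div 2) (y q) (y s)" for y
      using d by (simp_all add: sp_def R_def)
  show ?thesis
  unfolding choice_axioms_def
  proof (intro conjI ballI impI)
    fix z assume z: "z \<in> vbox {p,q,s} b"
    then show "sp p q s Q z \<in> vbox {p,q,s} b" using d bal_le[of "R z div 2" "R z - R z div 2" "z q" "z s"]
      by (auto simp: vbox_def v) (auto simp: sp_def)
    show "sp p q s Q z \<le> z" using bal_le[of "R z div 2" "R z - R z div 2" "z q" "z s"]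
      by (subst le3[OF Z]) (simp add: v)
  next
    fix z z' assume z: "z \<in> vbox {p,q,s} b" and z': "z' \<in> vbox {p,q,s} b" and le: "z' \<le> z"
    have l: "z' p \<le> z p" "z' q \<le> z q" "z' s \<le> z s" using le by (auto simp: le_fun_def)
    show "sp p q s Q z \<le> z' \<Longrightarrow> sp p q s Q z' = sp p q s Q z"
    proof -
      assume h: "sp p q s Q z \<le> z'"
      have h1: "min (z p) Q \<le> z' p" "balq (R z div 2) (R z - R z div 2) (z q) (z s) \<le> z' q"
         "bals (R z div 2) (R z - R z div 2) (z q) (z s) \<le> z' s"
        using le_funD[OF h, of p] le_funD[OF h, of q] le_funD[OF h, of s] by (simp_all add: v)
      have e1: "min (z' p) Q = min (z p) Q" using m1[OF l(1) h1(1)] .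
      have e0: "R z' = R z" using e1 by (simp add: R_def)
      show ?thesis using balA1[OF l(2) l(3) h1(2) h1(3)] e1 e0
        by (subst eq3[OF Z Z]) (simp add: v)
    qed
    have Zi: "\<forall>e. e \<notin> {p,q,s} \<longrightarrow> inf (sp p q s Q z) z' e = 0" by (simp add: sp_def inf_nat_def)
    have r1: "R z \<le> R z'" unfolding R_def using m4[OF l(1)] .
    show "inf (sp p q s Q z) z' \<le> sp p q s Q z'"
      apply (subst le3[OF Zi])
      unfolding inf_fun_def inf_nat_def v
      using m2[OF l(1) order_refl] balA2[OF l(2) l(3) div_le_mono[OF r1] hg_mono[OF r1]] by simp
    have t: "vnorm {p,q,s} (sp p q s Q y) = min (y p + y q + y s) Q" for y
    proof -
      have "vnorm {p,q,s} (sp p q s Q y) = min (y p) Q + (balq (R y div 2) (R y - R y div 2) (y q) (y s) + bals (R y div 2) (R y - R y div 2) (y q) (y s))"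
        using assms by (simp add: vnorm3 v)
      also have "\<dots> = min (y p) Q + min (y q + y s) (Q - min (y p) Q)" by (simp only: bal_sum hg_sum R_def)
      also have "\<dots> = min (y p + (y q + y s)) Q" by (simp only: m3)
      finally show ?thesis by (simp add: add.assoc)
    qed
    show "vnorm {p,q,s} (sp p q s Q z') \<le> vnorm {p,q,s} (sp p q s Q z)"
      unfolding t using l by simp
  qed
qed

lemma int_upd: assumes "z \<in> vbox Ev b" "e \<in> Ev"
  shows "interesting Ev b C z e \<longleftrightarrow> (\<exists>t. z e < t \<and> t \<le> b e \<and> z e < C (z(e:=t)) e)"
proof
  assume "interesting Ev b C z e"
  then obtain z' where z': "z' \<in> vbox Ev b" "z' e > z e" "\<forall>e'. e' \<noteq> e \<longrightarrow> z' e' = z e'" "C z' e > z e"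
    unfolding interesting_def by blast
  have "z' = z(e := z' e)" using z'(3) by auto
  then show "\<exists>t. z e < t \<and> t \<le> b e \<and> z e < C (z(e:=t)) e"
    using z' assms by (intro exI[of _ "z' e"]) (auto simp: vbox_def)
next
  assume "\<exists>t. z e < t \<and> t \<le> b e \<and> z e < C (z(e:=t)) e"
  then obtain t where t: "z e < t" "t \<le> b e" "z e < C (z(e:=t)) e" by blast
  show "interesting Ev b C z e" unfolding interesting_def
    using t assms by (intro conjI bexI[of _ "z(e:=t)"]) (auto simp: vbox_def)
qed

lemma prio2_acc: assumes "p \<noteq> q" "z \<in> vbox {p,q} b"
  shows "acceptable {p,q} b (prio2 p q Q) z \<longleftrightarrow> z p + z q \<le> Q"
proof -
  have Z: "\<forall>e. e \<notin> {p,q} \<longrightarrow> prio2 p q Q z e = 0" "\<forall>e. e \<notin> {p,q} \<longrightarrow> z e = 0"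
    using assms by (auto simp: prio2_def vbox_def)
  show ?thesis unfolding acceptable_def using assms(1,2) by (subst eq2[OF Z]) (auto simp: prio2_def min_def)
qed

lemma prio2_int_p: assumes "p \<noteq> q" "z \<in> vbox {p,q} b"
  shows "interesting {p,q} b (prio2 p q Q) z p \<longleftrightarrow> z p < b p \<and> z p < Q"
  using assms by (subst int_upd[OF assms(2)]) (auto simp: prio2_def intro: exI[of _ "Suc (z p)"])

lemma prio2_int_q: assumes "p \<noteq> q" "z \<in> vbox {p,q} b"
  shows "interesting {p,q} b (prio2 p q Q) z q \<longleftrightarrow> z q < b q \<and> z q < Q - min (z p) Q"
  using assms by (subst int_upd[OF assms(2)]) (auto simp: prio2_def intro: exI[of _ "Suc (z q)"])

lemma prio3_acc: assumes "distinct [p,q,s]" "z \<in> vbox {p,q,s} b"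
  shows "acceptable {p,q,s} b (prio3 p q s Q) z \<longleftrightarrow> z p + z q + z s \<le> Q"
proof -
  have Z: "\<forall>e. e \<notin> {p,q,s} \<longrightarrow> prio3 p q s Q z e = 0" "\<forall>e. e \<notin> {p,q,s} \<longrightarrow> z e = 0"
    using assms by (auto simp: prio3_def vbox_def)
  show ?thesis unfolding acceptable_def using assms(1,2) by (subst eq3[OF Z]) (auto simp: prio3_def min_def)
qed

lemma prio3_int_p: assumes "distinct [p,q,s]" "z \<in> vbox {p,q,s} b"
  shows "interesting {p,q,s} b (prio3 p q s Q) z p \<longleftrightarrow> z p < b p \<and> z p < Q"
  using assms by (subst int_upd[OF assms(2)]) (auto simp: prio3_def intro: exI[of _ "Suc (z p)"])

lemma prio3_int_q: assumes "distinct [p,q,s]" "z \<in> vbox {p,q,s} b"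
  shows "interesting {p,q,s} b (prio3 p q s Q) z q \<longleftrightarrow> z q < b q \<and> z q < Q - min (z p) Q"
  using assms by (subst int_upd[OF assms(2)]) (auto simp: prio3_def intro: exI[of _ "Suc (z q)"])

lemma prio3_int_s: assumes "distinct [p,q,s]" "z \<in> vbox {p,q,s} b"
  shows "interesting {p,q,s} b (prio3 p q s Q) z s \<longleftrightarrow> z s < b s \<and> z s < Q - min (z p) Q - min (z q) (Q - min (z p) Q)"
  using assms by (subst int_upd[OF assms(2)]) (auto simp: prio3_def intro: exI[of _ "Suc (z s)"])


lemma bal_fix: "(balq h g zq zs = zq \<and> bals h g zq zs = zs) \<longleftrightarrow> zq + zs \<le> h + g"
  unfolding balq_def bals_def by auto

lemma sp_acc: assumes "distinct [p,q,s]" "z \<in> vbox {p,q,s} b"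
  shows "acceptable {p,q,s} b (sp p q s Q) z \<longleftrightarrow> z p + z q + z s \<le> Q"
proof -
  have Z: "\<forall>e. e \<notin> {p,q,s} \<longrightarrow> sp p q s Q z e = 0" "\<forall>e. e \<notin> {p,q,s} \<longrightarrow> z e = 0"
    using assms by (auto simp: sp_def vbox_def)
  have d: "p\<noteq>q" "q\<noteq>p" "p\<noteq>s" "s\<noteq>p" "q\<noteq>s" "s\<noteq>q" using assms by auto
  have hs: "(Q - min (z p) Q) div 2 + (Q - min (z p) Q - (Q - min (z p) Q) div 2) = Q - min (z p) Q" by simp
  have "acceptable {p,q,s} b (sp p q s Q) z \<longleftrightarrow> min (z p) Q = z p \<and> z q + z s \<le> Q - min (z p) Q"
    unfolding acceptable_def using assms(2)
    by (subst eq3[OF Z]) (simp add: sp_def d bal_fix[where h="(Q - min (z p) Q) div 2", unfolded hs] conj_assoc)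
  also have "\<dots> \<longleftrightarrow> z p + z q + z s \<le> Q" by (auto simp: min_def)
  finally show ?thesis .
qed

lemma balq_int: "zq + zs \<le> h + g \<Longrightarrow>
  (\<exists>t. zq < t \<and> t \<le> B \<and> zq < balq h g t zs) \<longleftrightarrow> zq < B \<and> (zq + zs < h + g \<or> zq < h)"
  unfolding balq_def
  apply (rule iffI)
   apply (auto split: if_splits)[1]
  apply (rule exI[of _ "Suc zq"])
  by auto

lemma bals_int: "zq + zs \<le> h + g \<Longrightarrow>
  (\<exists>t. zs < t \<and> t \<le> B \<and> zs < bals h g zq t) \<longleftrightarrow> zs < B \<and> (zq + zs < h + g \<or> h < zq)"
  unfolding bals_def
  apply (rule iffI)
   apply (auto split: if_splits)[1]
  apply (rule exI[of _ "Suc zs"])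
  by auto

lemma sp_int_p: assumes "distinct [p,q,s]" "z \<in> vbox {p,q,s} b"
  shows "interesting {p,q,s} b (sp p q s Q) z p \<longleftrightarrow> z p < b p \<and> z p < Q"
  using assms by (subst int_upd[OF assms(2)]) (auto simp: sp_def intro: exI[of _ "Suc (z p)"])

lemma sp_int_q: assumes "distinct [p,q,s]" "z \<in> vbox {p,q,s} b" "z p + z q + z s \<le> Q"
  shows "interesting {p,q,s} b (sp p q s Q) z q \<longleftrightarrow> z q < b q \<and> (z q + z s < Q - z p \<or> z q < (Q - z p) div 2)"
proof -
  have mp: "min (z p) Q = z p" using assms(3) by simp
  have d: "p\<noteq>q" "q\<noteq>p" "p\<noteq>s" "s\<noteq>p" "q\<noteq>s" "s\<noteq>q" using assms by auto
  have hs: "(Q - z p) div 2 + (Q - z p - (Q - z p) div 2) = Q - z p" by simp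
  have le: "z q + z s \<le> (Q - z p) div 2 + (Q - z p - (Q - z p) div 2)" using assms(3) by simp
  show ?thesis
    apply (subst int_upd[OF assms(2)])
     apply simp
    apply (simp add: sp_def d mp)
    using balq_int[OF le, of "b q"] unfolding hs by (simp add: diff_diff_left)
qed

lemma sp_int_s: assumes "distinct [p,q,s]" "z \<in> vbox {p,q,s} b" "z p + z q + z s \<le> Q"
  shows "interesting {p,q,s} b (sp p q s Q) z s \<longleftrightarrow> z s < b s \<and> (z q + z s < Q - z p \<or> (Q - z p) div 2 < z q)"
proof -
  have mp: "min (z p) Q = z p" using assms(3) by simp
  have d: "p\<noteq>q" "q\<noteq>p" "p\<noteq>s" "s\<noteq>p" "q\<noteq>s" "s\<noteq>q" using assms by auto
  have hs: "(Q - z p) div 2 + (Q - z p - (Q - z p) div 2) = Q - z p" by simp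
  have le: "z q + z s \<le> (Q - z p) div 2 + (Q - z p - (Q - z p) div 2)" using assms(3) by simp
  show ?thesis
    apply (subst int_upd[OF assms(2)])
     apply simp
    apply (simp add: sp_def d mp)
    using bals_int[OF le, of "b s"] unfolding hs by (simp add: diff_diff_left)
qed

abbreviation "eA \<equiv> (2::nat, 2::nat)"
abbreviation "eD \<equiv> (2::nat, 3::nat)"
abbreviation "eC2 \<equiv> (3::nat, 2::nat)"
abbreviation "eB2 \<equiv> (3::nat, 3::nat)"
abbreviation "eC3 \<equiv> (4::nat, 2::nat)"
abbreviation "eB3 \<equiv> (4::nat, 3::nat)"

definition EE :: "(nat \<times> nat) set" where "EE = {eA, eD, eC2, eB2, eC3, eB3}"

definition capk :: "nat \<Rightarrow> nat \<times> nat \<Rightarrow> nat" where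
  "capk k e = (if e = eA \<or> e = eD then 2*k else if e \<in> EE then k else 0)"

definition chWk :: "nat \<Rightarrow> nat \<Rightarrow> (nat \<times> nat \<Rightarrow> nat) \<Rightarrow> (nat \<times> nat \<Rightarrow> nat)" where
  "chWk k w = (if w = 2 then prio2 eD eA (2*k) else if w = 3 then prio2 eC2 eB2 k else prio2 eC3 eB3 k)"

definition chFk :: "nat \<Rightarrow> nat \<Rightarrow> (nat \<times> nat \<Rightarrow> nat) \<Rightarrow> (nat \<times> nat \<Rightarrow> nat)" where
  "chFk k f = (if f = 2 then sp eA eC2 eC3 (2*k) else prio3 eB2 eB3 eD (2*k))"

definition inst :: "nat \<Rightarrow> (nat, nat) ginst" where
  "inst k = \<lparr>Wv = {2,3,4}, Fv = {2,3}, Ed = EE, cap = capk k, chW = chWk k, chF = chFk k\<rparr>"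

lemma inst_simps[simp]: "Wv (inst k) = {2,3,4}" "Fv (inst k) = {2,3}" "Ed (inst k) = EE"
  "cap (inst k) = capk k" "chW (inst k) = chWk k" "chF (inst k) = chFk k"
  by (simp_all add: inst_def)

lemma Ew1: "Ew (inst k) 2 = {eD, eA}" by (auto simp: Ew_def EE_def)
lemma Ew2: "Ew (inst k) 3 = {eC2, eB2}" by (auto simp: Ew_def EE_def)
lemma Ew3: "Ew (inst k) 4 = {eC3, eB3}" by (auto simp: Ew_def EE_def)
lemma Ef1: "Ef (inst k) 2 = {eA, eC2, eC3}" by (auto simp: Ef_def EE_def)
lemma Ef2: "Ef (inst k) 3 = {eB2, eB3, eD}" by (auto simp: Ef_def EE_def)

lemma capk_simps[simp]: "capk k eA = 2*k" "capk k eD = 2*k" "capk k eC2 = k" "capk k eB2 = k"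
  "capk k eC3 = k" "capk k eB3 = k"
  by (simp_all add: capk_def EE_def)

lemma chWk_simps[simp]: "chWk k 2 = prio2 eD eA (2*k)" "chWk k 3 = prio2 eC2 eB2 k" "chWk k 4 = prio2 eC3 eB3 k"
  by (simp_all add: chWk_def)
lemma chFk_simps[simp]: "chFk k 2 = sp eA eC2 eC3 (2*k)" "chFk k 3 = prio3 eB2 eB3 eD (2*k)"
  by (simp_all add: chFk_def)

lemma valid: "valid_instance (inst k)"
  unfolding valid_instance_def
  by (auto simp: EE_def Ew1 Ew2 Ew3 Ef1 Ef2 intro!: prio2_axioms prio3_axioms sp_axioms)

lemma bmax_inst: "k \<ge> 1 \<Longrightarrow> bmax (inst k) = 2*k"
proof -
  assume "k \<ge> 1"
  have "capk k ` EE = {2*k, k}" unfolding EE_def by (simp add: insert_commute)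
  then show ?thesis by (simp add: bmax_def)
qed


lemma restr_in: "e \<in> Ev \<Longrightarrow> restr Ev x e = x e" by (simp add: restr_def)
lemma restr_vbox: "(\<forall>e\<in>Ev. x e \<le> b e) \<Longrightarrow> restr Ev x \<in> vbox Ev b" by (simp add: restr_def vbox_def)

lemma d2: "distinct [eA, eC2, eC3]" "distinct [eB2, eB3, eD]" "eD \<noteq> eA" "eC2 \<noteq> eB2" "eC3 \<noteq> eB3" by auto

definition sumsk :: "nat \<Rightarrow> (nat \<times> nat \<Rightarrow> nat) \<Rightarrow> bool" where
  "sumsk k x \<longleftrightarrow> x eD + x eA \<le> 2*k \<and> x eC2 + x eB2 \<le> k \<and> x eC3 + x eB3 \<le> k \<and>
     x eA + x eC2 + x eC3 \<le> 2*k \<and> x eB2 + x eB3 + x eD \<le> 2*k"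

lemma gm_iff: "gmatching (inst k) x \<longleftrightarrow> (\<forall>e. e \<notin> EE \<longrightarrow> x e = 0) \<and> sumsk k x"
proof
  assume g: "gmatching (inst k) x"
  then have z: "\<forall>e. e \<notin> EE \<longrightarrow> x e = 0" and c: "\<forall>e\<in>EE. x e \<le> capk k e" by (auto simp: gmatching_def)
  have c': "x eA \<le> 2*k" "x eD \<le> 2*k" "x eC2 \<le> k" "x eB2 \<le> k" "x eC3 \<le> k" "x eB3 \<le> k"
    using c by (auto simp: EE_def dest!: bspec)
  have v1: "restr {eD, eA} x \<in> vbox {eD, eA} (capk k)" using c' by (intro restr_vbox) auto
  have v2: "restr {eC2, eB2} x \<in> vbox {eC2, eB2} (capk k)" using c' by (intro restr_vbox) auto
  have v3: "restr {eC3, eB3} x \<in> vbox {eC3, eB3} (capk k)" using c' by (intro restr_vbox) auto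
  have v4: "restr {eA, eC2, eC3} x \<in> vbox {eA, eC2, eC3} (capk k)" using c' by (intro restr_vbox) auto
  have v5: "restr {eB2, eB3, eD} x \<in> vbox {eB2, eB3, eD} (capk k)" using c' by (intro restr_vbox) auto
  have a: "acceptable {eD, eA} (capk k) (prio2 eD eA (2*k)) (restr {eD, eA} x)"
    "acceptable {eC2, eB2} (capk k) (prio2 eC2 eB2 k) (restr {eC2, eB2} x)"
    "acceptable {eC3, eB3} (capk k) (prio2 eC3 eB3 k) (restr {eC3, eB3} x)"
    "acceptable {eA, eC2, eC3} (capk k) (sp eA eC2 eC3 (2*k)) (restr {eA, eC2, eC3} x)"
    "acceptable {eB2, eB3, eD} (capk k) (prio3 eB2 eB3 eD (2*k)) (restr {eB2, eB3, eD} x)"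
    using g by (auto simp: gmatching_def Ew1 Ew2 Ew3 Ef1 Ef2)
  show "(\<forall>e. e \<notin> EE \<longrightarrow> x e = 0) \<and> sumsk k x"
    using z a[unfolded prio2_acc[OF d2(3) v1] prio2_acc[OF d2(4) v2] prio2_acc[OF d2(5) v3]
       sp_acc[OF d2(1) v4] prio3_acc[OF d2(2) v5]]
    by (simp add: sumsk_def restr_in; linarith)
next
  assume h: "(\<forall>e. e \<notin> EE \<longrightarrow> x e = 0) \<and> sumsk k x"
  then have c': "x eA \<le> 2*k" "x eD \<le> 2*k" "x eC2 \<le> k" "x eB2 \<le> k" "x eC3 \<le> k" "x eB3 \<le> k"
    by (auto simp: sumsk_def)
  have v1: "restr {eD, eA} x \<in> vbox {eD, eA} (capk k)" using c' by (intro restr_vbox) auto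
  have v2: "restr {eC2, eB2} x \<in> vbox {eC2, eB2} (capk k)" using c' by (intro restr_vbox) auto
  have v3: "restr {eC3, eB3} x \<in> vbox {eC3, eB3} (capk k)" using c' by (intro restr_vbox) auto
  have v4: "restr {eA, eC2, eC3} x \<in> vbox {eA, eC2, eC3} (capk k)" using c' by (intro restr_vbox) auto
  have v5: "restr {eB2, eB3, eD} x \<in> vbox {eB2, eB3, eD} (capk k)" using c' by (intro restr_vbox) auto
  show "gmatching (inst k) x"
    unfolding gmatching_def
    using h c' prio2_acc[OF d2(3) v1] prio2_acc[OF d2(4) v2] prio2_acc[OF d2(5) v3]
       sp_acc[OF d2(1) v4] prio3_acc[OF d2(2) v5]
    by (auto simp: Ew1 Ew2 Ew3 Ef1 Ef2 sumsk_def restr_in EE_def)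
qed


lemma intr:
  assumes "sumsk k x"
  shows "interesting_w (inst k) x eA \<longleftrightarrow> x eA + x eD < 2*k"
    "interesting_f (inst k) x eA \<longleftrightarrow> x eA < 2*k"
    "interesting_w (inst k) x eD \<longleftrightarrow> x eD < 2*k"
    "interesting_f (inst k) x eD \<longleftrightarrow> x eB2 + x eB3 + x eD < 2*k"
    "interesting_w (inst k) x eC2 \<longleftrightarrow> x eC2 < k"
    "interesting_f (inst k) x eC2 \<longleftrightarrow> x eC2 < k \<and> (x eC2 + x eC3 < 2*k - x eA \<or> x eC2 < (2*k - x eA) div 2)"
    "interesting_w (inst k) x eB2 \<longleftrightarrow> x eC2 + x eB2 < k"
    "interesting_f (inst k) x eB2 \<longleftrightarrow> x eB2 < k"
    "interesting_w (inst k) x eC3 \<longleftrightarrow> x eC3 < k"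
    "interesting_f (inst k) x eC3 \<longleftrightarrow> x eC3 < k \<and> (x eC2 + x eC3 < 2*k - x eA \<or> (2*k - x eA) div 2 < x eC2)"
    "interesting_w (inst k) x eB3 \<longleftrightarrow> x eC3 + x eB3 < k"
    "interesting_f (inst k) x eB3 \<longleftrightarrow> x eB3 < k"
proof -
  have c': "x eA \<le> 2*k" "x eD \<le> 2*k" "x eC2 \<le> k" "x eB2 \<le> k" "x eC3 \<le> k" "x eB3 \<le> k"
    using assms by (auto simp: sumsk_def)
  have v1: "restr {eD, eA} x \<in> vbox {eD, eA} (capk k)" using c' by (intro restr_vbox) auto
  have v2: "restr {eC2, eB2} x \<in> vbox {eC2, eB2} (capk k)" using c' by (intro restr_vbox) auto
  have v3: "restr {eC3, eB3} x \<in> vbox {eC3, eB3} (capk k)" using c' by (intro restr_vbox) auto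
  have v4: "restr {eA, eC2, eC3} x \<in> vbox {eA, eC2, eC3} (capk k)" using c' by (intro restr_vbox) auto
  have v5: "restr {eB2, eB3, eD} x \<in> vbox {eB2, eB3, eD} (capk k)" using c' by (intro restr_vbox) auto
  have s4: "restr {eA, eC2, eC3} x eA + restr {eA, eC2, eC3} x eC2 + restr {eA, eC2, eC3} x eC3 \<le> 2*k"
    using assms by (simp add: restr_in sumsk_def)
  show "interesting_w (inst k) x eA \<longleftrightarrow> x eA + x eD < 2*k"
    unfolding interesting_w_def using c' by (simp add: Ew1 prio2_int_q[OF d2(3) v1] restr_in; linarith)
  show "interesting_f (inst k) x eA \<longleftrightarrow> x eA < 2*k"
    unfolding interesting_f_def using c' by (simp add: Ef1 sp_int_p[OF d2(1) v4] restr_in; linarith)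
  show "interesting_w (inst k) x eD \<longleftrightarrow> x eD < 2*k"
    unfolding interesting_w_def using c' by (simp add: Ew1 prio2_int_p[OF d2(3) v1] restr_in; linarith)
  show "interesting_f (inst k) x eD \<longleftrightarrow> x eB2 + x eB3 + x eD < 2*k"
    unfolding interesting_f_def using c' by (simp add: Ef2 prio3_int_s[OF d2(2) v5] restr_in; linarith)
  show "interesting_w (inst k) x eC2 \<longleftrightarrow> x eC2 < k"
    unfolding interesting_w_def using c' by (simp add: Ew2 prio2_int_p[OF d2(4) v2] restr_in; linarith)
  show "interesting_f (inst k) x eC2 \<longleftrightarrow> x eC2 < k \<and> (x eC2 + x eC3 < 2*k - x eA \<or> x eC2 < (2*k - x eA) div 2)"
    unfolding interesting_f_def using c' by (simp add: Ef1 sp_int_q[OF d2(1) v4 s4] restr_in; linarith)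
  show "interesting_w (inst k) x eB2 \<longleftrightarrow> x eC2 + x eB2 < k"
    unfolding interesting_w_def using c' by (simp add: Ew2 prio2_int_q[OF d2(4) v2] restr_in; linarith)
  show "interesting_f (inst k) x eB2 \<longleftrightarrow> x eB2 < k"
    unfolding interesting_f_def using c' by (simp add: Ef2 prio3_int_p[OF d2(2) v5] restr_in; linarith)
  show "interesting_w (inst k) x eC3 \<longleftrightarrow> x eC3 < k"
    unfolding interesting_w_def using c' by (simp add: Ew3 prio2_int_p[OF d2(5) v3] restr_in; linarith)
  show "interesting_f (inst k) x eC3 \<longleftrightarrow> x eC3 < k \<and> (x eC2 + x eC3 < 2*k - x eA \<or> (2*k - x eA) div 2 < x eC2)"
    unfolding interesting_f_def using c' by (simp add: Ef1 sp_int_s[OF d2(1) v4 s4] restr_in; linarith)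
  show "interesting_w (inst k) x eB3 \<longleftrightarrow> x eC3 + x eB3 < k"
    unfolding interesting_w_def using c' by (simp add: Ew3 prio2_int_q[OF d2(5) v3] restr_in; linarith)
  show "interesting_f (inst k) x eB3 \<longleftrightarrow> x eB3 < k"
    unfolding interesting_f_def using c' by (simp add: Ef2 prio3_int_q[OF d2(2) v5] restr_in; linarith)
qed


lemma arith_char0:
  fixes a d c2 b2 c3 b3 k h :: nat
  assumes "d + a \<le> 2*k" "c2+b2 \<le> k" "c3+b3 \<le> k" "a+c2+c3 \<le> 2*k" "b2+b3+d \<le> 2*k"
   "\<not>(a + d < 2*k \<and> a < 2*k)" "\<not>(d < 2*k \<and> b2+b3+d < 2*k)"
   "\<not>(c2 < k \<and> (c2+c3 < 2*k - a \<or> c2 < h))" "\<not>(c2+b2 < k \<and> b2 < k)"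
   "\<not>(c3 < k \<and> (c2+c3 < 2*k - a \<or> h < c2))" "\<not>(c3+b3 < k \<and> b3 < k)"
   "2*h \<le> 2*k - a" "2*k - a \<le> 2*h + 1"
  shows "a \<le> 2*k \<and> d = 2*k - a \<and> c2 = h \<and> c3 = 2*k - a - h \<and>
     b2 = k - h \<and> b3 = k - (2*k - a - h)"
proof -
  have "a + d \<ge> 2*k \<or> a \<ge> 2*k" using assms(6) by auto
  then have 1: "a + d = 2*k" using assms(1) by auto
  have "c2 + b2 \<ge> k \<or> b2 \<ge> k" using assms(9) by auto
  then have 2: "c2 + b2 = k" using assms(2) by auto
  have "c3 + b3 \<ge> k \<or> b3 \<ge> k" using assms(11) by auto
  then have 3: "c3 + b3 = k" using assms(3) by auto
  have "d \<ge> 2*k \<or> b2 + b3 + d \<ge> 2*k" using assms(7) by auto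
  then have 4: "b2 + b3 + d = 2*k" using assms(5) by auto
  have 5: "c2 + c3 = 2*k - a" using 1 2 3 4 by simp
  have "c2 \<ge> k \<or> c2 \<ge> h" using assms(8) 5 by auto
  then have 6: "c2 \<ge> h" using assms(12,13) 5 by auto
  have "c3 \<ge> k \<or> c2 \<le> h" using assms(10) 5 by auto
  then have 7: "c2 \<le> h" using assms(12,13) 5 6 3 by auto
  have 8: "c2 = h" using 6 7 by simp
  show ?thesis using 1 2 3 4 5 8 by auto
qed

lemma arith_char:
  fixes a d c2 b2 c3 b3 k :: nat
  assumes "d + a \<le> 2*k" "c2+b2 \<le> k" "c3+b3 \<le> k" "a+c2+c3 \<le> 2*k" "b2+b3+d \<le> 2*k"
   "\<not>(a + d < 2*k \<and> a < 2*k)" "\<not>(d < 2*k \<and> b2+b3+d < 2*k)"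
   "\<not>(c2 < k \<and> (c2+c3 < 2*k - a \<or> c2 < (2*k-a) div 2))" "\<not>(c2+b2 < k \<and> b2 < k)"
   "\<not>(c3 < k \<and> (c2+c3 < 2*k - a \<or> (2*k-a) div 2 < c2))" "\<not>(c3+b3 < k \<and> b3 < k)"
  shows "a \<le> 2*k \<and> d = 2*k - a \<and> c2 = (2*k-a) div 2 \<and> c3 = 2*k - a - (2*k-a) div 2 \<and>
     b2 = k - (2*k-a) div 2 \<and> b3 = k - (2*k - a - (2*k-a) div 2)"
  by (rule arith_char0[OF assms]) presburger+


definition hk :: "nat \<Rightarrow> nat \<Rightarrow> nat" where "hk k j = (2*k - j) div 2"

definition xv :: "nat \<Rightarrow> nat \<Rightarrow> nat \<times> nat \<Rightarrow> nat" where
  "xv k j = (\<lambda>e. if e = eA then j else if e = eD then 2*k - j else if e = eC2 then hk k j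
     else if e = eB2 then k - hk k j else if e = eC3 then 2*k - j - hk k j
     else if e = eB3 then k - (2*k - j - hk k j) else 0)"

lemma xv_simps[simp]: "xv k j eA = j" "xv k j eD = 2*k - j" "xv k j eC2 = hk k j"
  "xv k j eB2 = k - hk k j" "xv k j eC3 = 2*k - j - hk k j" "xv k j eB3 = k - (2*k - j - hk k j)"
  by (simp_all add: xv_def)

lemma xv_out: "e \<notin> EE \<Longrightarrow> xv k j e = 0" by (auto simp: xv_def EE_def)

lemma hk_bounds: "2 * hk k j \<le> 2*k - j" "2*k - j \<le> 2 * hk k j + 1" unfolding hk_def by presburger+

lemma blocking_iff: "blocking I x e \<longleftrightarrow> e \<in> Ed I \<and> interesting_w I x e \<and> interesting_f I x e"
  by (simp add: blocking_def)

lemma ex_EE: "(\<exists>e. e \<in> EE \<and> P e) \<longleftrightarrow> P eA \<or> P eD \<or> P eC2 \<or> P eB2 \<or> P eC3 \<or> P eB3"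
  by (auto simp: EE_def)

lemma stable_iff_arith: "stable (inst k) x \<longleftrightarrow> (\<forall>e. e \<notin> EE \<longrightarrow> x e = 0) \<and> sumsk k x \<and>
  \<not>(x eA + x eD < 2*k \<and> x eA < 2*k) \<and> \<not>(x eD < 2*k \<and> x eB2 + x eB3 + x eD < 2*k) \<and>
  \<not>(x eC2 < k \<and> (x eC2 + x eC3 < 2*k - x eA \<or> x eC2 < (2*k - x eA) div 2)) \<and>
  \<not>(x eC2 + x eB2 < k \<and> x eB2 < k) \<and>
  \<not>(x eC3 < k \<and> (x eC2 + x eC3 < 2*k - x eA \<or> (2*k - x eA) div 2 < x eC2)) \<and>
  \<not>(x eC3 + x eB3 < k \<and> x eB3 < k)"
proof -
  have S: "stable (inst k) x \<longleftrightarrow> (\<forall>e. e \<notin> EE \<longrightarrow> x e = 0) \<and> sumsk k x \<and>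
     \<not>(interesting_w (inst k) x eA \<and> interesting_f (inst k) x eA) \<and>
     \<not>(interesting_w (inst k) x eD \<and> interesting_f (inst k) x eD) \<and>
     \<not>(interesting_w (inst k) x eC2 \<and> interesting_f (inst k) x eC2) \<and>
     \<not>(interesting_w (inst k) x eB2 \<and> interesting_f (inst k) x eB2) \<and>
     \<not>(interesting_w (inst k) x eC3 \<and> interesting_f (inst k) x eC3) \<and>
     \<not>(interesting_w (inst k) x eB3 \<and> interesting_f (inst k) x eB3)"
    unfolding stable_def blocking_def gm_iff by (auto simp: EE_def)
  show ?thesis
  proof (cases "sumsk k x")
    case True show ?thesis unfolding S by (simp add: intr[OF True] del: One_nat_def)
  next
    case False show ?thesis unfolding S using False by simp
  qed
qed


lemma xv_stable: assumes "j \<le> 2*k" shows "stable (inst k) (xv k j)"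
proof -
  have b: "2 * hk k j \<le> 2*k - j" "2*k - j \<le> 2 * hk k j + 1" by (rule hk_bounds)+
  show ?thesis unfolding stable_iff_arith
    using assms b by (auto simp: sumsk_def xv_out simp flip: hk_def)
qed

lemma stable_xv: assumes "stable (inst k) x" shows "\<exists>j \<le> 2*k. x = xv k j"
proof -
  note S = assms[unfolded stable_iff_arith]
  have sk: "sumsk k x" using S by blast
  have c: "x eA \<le> 2*k \<and> x eD = 2*k - x eA \<and> x eC2 = (2*k - x eA) div 2 \<and> x eC3 = 2*k - x eA - (2*k - x eA) div 2 \<and>
     x eB2 = k - (2*k - x eA) div 2 \<and> x eB3 = k - (2*k - x eA - (2*k - x eA) div 2)"
    apply (rule arith_char)
    using S sk unfolding sumsk_def by (simp_all add: add.commute)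
  have "x = xv k (x eA)"
  proof
    fix e show "x e = xv k (x eA) e"
    proof (cases "e \<in> EE")
      case True then show ?thesis using c by (auto simp: EE_def hk_def)
    next
      case False
      have "\<forall>e. e \<notin> EE \<longrightarrow> x e = 0" using S by blast
      then have "x e = 0" using False by blast
      then show ?thesis using False by (simp add: xv_out)
    qed
  qed
  then show ?thesis using c by blast
qed

lemma stable_iff: "stable (inst k) x \<longleftrightarrow> (\<exists>j \<le> 2*k. x = xv k j)"
  using stable_xv xv_stable by blast


lemma hk_mono: assumes "i \<le> j" "j \<le> 2*k"
  shows "hk k j \<le> hk k i \<and> 2*k - j - hk k j \<le> 2*k - i - hk k i \<and> hk k i \<le> k \<and> 2*k - i - hk k i \<le> k"
proof -
  have 1: "hk k j \<le> hk k i" unfolding hk_def by (rule div_le_mono) (use assms in linarith)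
  have 2: "2*k - j - hk k j \<le> 2*k - i - hk k i" unfolding hk_def by (rule hg_mono) (use assms in linarith)
  have 3: "hk k i \<le> k" unfolding hk_def by (metis div_le_mono diff_le_self nonzero_mult_div_cancel_left zero_neq_numeral)
  have 4: "2*k - i - hk k i \<le> k" using hg_mono[of "2*k - i" "2*k"] unfolding hk_def by simp
  show ?thesis using 1 2 3 4 by blast
qed

lemma bal_lower: "h \<le> c2 \<Longrightarrow> g \<le> c3 \<Longrightarrow> balq h g c2 c3 = h \<and> bals h g c2 c3 = g"
  by (auto simp: balq_def bals_def)

lemma sup_f1: assumes "i \<le> j" "j \<le> 2*k"
  shows "sp eA eC2 eC3 (2*k) (sup (restr {eA,eC2,eC3} (xv k j)) (restr {eA,eC2,eC3} (xv k i))) = restr {eA,eC2,eC3} (xv k j)"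
proof -
  define z where "z = sup (restr {eA,eC2,eC3} (xv k j)) (restr {eA,eC2,eC3} (xv k i))"
  define y where "y = restr {eA,eC2,eC3} (xv k j)"
  have m: "hk k j \<le> hk k i" "2*k - j - hk k j \<le> 2*k - i - hk k i" using hk_mono[OF assms] by auto
  have zv: "z eA = j" "z eC2 = hk k i" "z eC3 = 2*k - i - hk k i"
    using assms m unfolding z_def by (simp_all add: restr_def sup_nat_def)
  have yv: "y eA = j" "y eC2 = hk k j" "y eC3 = 2*k - j - hk k j"
    unfolding y_def by (simp_all add: restr_def)
  have h: "(2*k - j) div 2 = hk k j" by (simp add: hk_def)
  have bl: "balq (hk k j) (2*k - j - hk k j) (hk k i) (2*k - i - hk k i) = hk k j"
    "bals (hk k j) (2*k - j - hk k j) (hk k i) (2*k - i - hk k i) = 2*k - j - hk k j"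
    using bal_lower[OF m] by auto
  have Z: "\<forall>e. e \<notin> {eA,eC2,eC3} \<longrightarrow> sp eA eC2 eC3 (2*k) z e = 0" "\<forall>e. e \<notin> {eA,eC2,eC3} \<longrightarrow> y e = 0"
    unfolding y_def by (simp_all add: sp_def restr_def)
  have "sp eA eC2 eC3 (2*k) z = y"
    apply (subst eq3[OF Z])
    unfolding sp_def using assms bl by (simp add: zv yv h)
  then show ?thesis unfolding z_def y_def .
qed


lemma sup_f2: assumes "i \<le> j" "j \<le> 2*k"
  shows "prio3 eB2 eB3 eD (2*k) (sup (restr {eB2,eB3,eD} (xv k j)) (restr {eB2,eB3,eD} (xv k i))) = restr {eB2,eB3,eD} (xv k j)"
proof -
  define z where "z = sup (restr {eB2,eB3,eD} (xv k j)) (restr {eB2,eB3,eD} (xv k i))"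
  define y where "y = restr {eB2,eB3,eD} (xv k j)"
  have m: "hk k j \<le> hk k i" "2*k - j - hk k j \<le> 2*k - i - hk k i" "hk k i \<le> k" "2*k - i - hk k i \<le> k" using hk_mono[OF assms] by auto
  have b: "2 * hk k j \<le> 2*k - j" "2*k - j \<le> 2 * hk k j + 1" by (rule hk_bounds)+
  have zv: "z eB2 = k - hk k j" "z eB3 = k - (2*k - j - hk k j)" "z eD = 2*k - i"
    using assms m unfolding z_def by (simp_all add: restr_def sup_nat_def)
  have yv: "y eB2 = k - hk k j" "y eB3 = k - (2*k - j - hk k j)" "y eD = 2*k - j"
    unfolding y_def by (simp_all add: restr_def)
  have Z: "\<forall>e. e \<notin> {eB2,eB3,eD} \<longrightarrow> prio3 eB2 eB3 eD (2*k) z e = 0" "\<forall>e. e \<notin> {eB2,eB3,eD} \<longrightarrow> y e = 0"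
    unfolding y_def by (simp_all add: prio3_def restr_def)
  have s: "(k - hk k j) + (k - (2*k - j - hk k j)) = j" using b assms m by linarith
  have f1: "min (k - hk k j) (2*k) = k - hk k j" by simp
  have f2: "min (k - (2*k - j - hk k j)) (2*k - (k - hk k j)) = k - (2*k - j - hk k j)" using m by simp
  have f3: "2*k - (k - hk k j) - (k - (2*k - j - hk k j)) = 2*k - j" using s by linarith
  have f4: "min (2*k - i) (2*k - j) = 2*k - j" using assms by simp
  have "prio3 eB2 eB3 eD (2*k) z = y"
    apply (subst eq3[OF Z])
    unfolding prio3_def using f1 f2 f3 f4 by (simp add: zv yv)
  then show ?thesis unfolding z_def y_def .
qed

lemma xv_gm: "j \<le> 2*k \<Longrightarrow> gmatching (inst k) (xv k j)"
  using xv_stable by (simp add: stable_def)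

lemma accF2: "j \<le> 2*k \<Longrightarrow> acceptable {eA,eC2,eC3} (capk k) (sp eA eC2 eC3 (2*k)) (restr {eA,eC2,eC3} (xv k j))"
  using xv_gm[of j k] by (auto simp: gmatching_def Ef1)
lemma accF3: "j \<le> 2*k \<Longrightarrow> acceptable {eB2,eB3,eD} (capk k) (prio3 eB2 eB3 eD (2*k)) (restr {eB2,eB3,eD} (xv k j))"
  using xv_gm[of j k] by (auto simp: gmatching_def Ef2)

lemma xv_inj: "xv k i = xv k j \<Longrightarrow> i = j"
  by (metis xv_simps(1))

lemma precF_chain: assumes "i \<le> j" "j \<le> 2*k" shows "precF_eq (inst k) (xv k i) (xv k j)"
proof (cases "i = j")
  case True then show ?thesis by (simp add: precF_eq_def)
next
  case False
  have n2: "restr {eA,eC2,eC3} (xv k j) \<noteq> restr {eA,eC2,eC3} (xv k i)"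
    using False by (metis insertI1 restr_in xv_simps(1))
  have n3: "restr {eB2,eB3,eD} (xv k j) \<noteq> restr {eB2,eB3,eD} (xv k i)"
  proof
    assume "restr {eB2,eB3,eD} (xv k j) = restr {eB2,eB3,eD} (xv k i)"
    then have "restr {eB2,eB3,eD} (xv k j) eD = restr {eB2,eB3,eD} (xv k i) eD" by simp
    then have "2*k - j = 2*k - i" by (simp add: restr_in)
    then show False using False assms by linarith
  qed
  have "vprec {eA,eC2,eC3} (capk k) (sp eA eC2 eC3 (2*k)) (restr {eA,eC2,eC3} (xv k i)) (restr {eA,eC2,eC3} (xv k j))"
    unfolding vprec_def using accF2[of j k] accF2[of i k] assms n2 sup_f1[OF assms] by simp
  moreover have "vprec {eB2,eB3,eD} (capk k) (prio3 eB2 eB3 eD (2*k)) (restr {eB2,eB3,eD} (xv k i)) (restr {eB2,eB3,eD} (xv k j))"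
    unfolding vprec_def using accF3[of j k] accF3[of i k] assms n3 sup_f2[OF assms] by simp
  ultimately show ?thesis unfolding precF_eq_def vpreceq_def by (auto simp: Ef1 Ef2)
qed

lemma not_precF: assumes "i < j" "j \<le> 2*k" shows "\<not> precF_eq (inst k) (xv k j) (xv k i)"
proof
  assume p: "precF_eq (inst k) (xv k j) (xv k i)"
  have ne: "xv k j \<noteq> xv k i" using assms xv_inj by fastforce
  have n2: "restr {eA,eC2,eC3} (xv k i) \<noteq> restr {eA,eC2,eC3} (xv k j)"
    using assms by (metis insertI1 restr_in xv_simps(1) less_irrefl)
  have "vpreceq {eA,eC2,eC3} (capk k) (sp eA eC2 eC3 (2*k)) (restr {eA,eC2,eC3} (xv k j)) (restr {eA,eC2,eC3} (xv k i))"
    using p ne unfolding precF_eq_def by (auto simp: Ef1)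
  then have "sp eA eC2 eC3 (2*k) (sup (restr {eA,eC2,eC3} (xv k i)) (restr {eA,eC2,eC3} (xv k j))) = restr {eA,eC2,eC3} (xv k i)"
    using n2 unfolding vpreceq_def vprec_def by auto
  moreover have "sp eA eC2 eC3 (2*k) (sup (restr {eA,eC2,eC3} (xv k j)) (restr {eA,eC2,eC3} (xv k i))) = restr {eA,eC2,eC3} (xv k j)"
    using sup_f1 assms by simp
  ultimately show False using n2 by (simp add: sup_commute)
qed

lemma is_xmin_iff: "is_xmin (inst k) x \<longleftrightarrow> x = xv k 0"
proof
  assume m: "is_xmin (inst k) x"
  then obtain j where j: "j \<le> 2*k" "x = xv k j" using stable_iff by (auto simp: is_xmin_def)
  have "precF_eq (inst k) x (xv k 0)" using m xv_stable[of 0 k] by (simp add: is_xmin_def)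
  then show "x = xv k 0" using not_precF[of 0 j k] j by (cases "j = 0") auto
next
  assume "x = xv k 0"
  then show "is_xmin (inst k) x" unfolding is_xmin_def using xv_stable[of 0 k] precF_chain stable_iff
    by auto
qed

lemma is_xmax_iff: "is_xmax (inst k) x \<longleftrightarrow> x = xv k (2*k)"
proof
  assume m: "is_xmax (inst k) x"
  then obtain j where j: "j \<le> 2*k" "x = xv k j" using stable_iff by (auto simp: is_xmax_def)
  have "precF_eq (inst k) (xv k (2*k)) x" using m xv_stable[of "2*k" k] by (simp add: is_xmax_def)
  then show "x = xv k (2*k)" using not_precF[of j "2*k" k] j by (cases "j = 2*k") auto
next
  assume "x = xv k (2*k)"
  then show "is_xmax (inst k) x" unfolding is_xmax_def using xv_stable[of "2*k" k] precF_chain stable_iff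
    by auto
qed


lemma hk_even: "t \<le> k \<Longrightarrow> hk k (2*t) = k - t" unfolding hk_def by presburger
lemma hk_odd: "t < k \<Longrightarrow> hk k (2*t+1) = k - t - 1" unfolding hk_def by presburger

lemma hk_odd': "t < k \<Longrightarrow> hk k (Suc (2*t)) = k - Suc t" using hk_odd by simp

lemma sumsk_xv: "j \<le> 2*k \<Longrightarrow> sumsk k (xv k j)"
  using xv_gm gm_iff by blast

lemma Uplus_xv: assumes "j \<le> 2*k"
  shows "Uplus (inst k) (xv k j) = {e. (e = eA \<and> j < 2*k) \<or> (e = eB2 \<and> 0 < hk k j) \<or> (e = eB3 \<and> 0 < 2*k - j - hk k j)}"
proof -
  note I = intr[OF sumsk_xv[OF assms]]
  have b: "2 * hk k j \<le> 2*k - j" "2*k - j \<le> 2 * hk k j + 1" by (rule hk_bounds)+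
  have hb: "hk k j \<le> k" using hk_mono[of j j k] assms by simp
  have hb2: "(k - hk k j < k) = (0 < hk k j)" using hb by arith
  have hb3: "(k - (2*k - j - hk k j) < k) = (0 < 2*k - j - hk k j)" using hk_mono[of j j k] assms by arith
  have "interesting_f (inst k) (xv k j) eD = False" using I(4) b assms by simp
  moreover have "interesting_f (inst k) (xv k j) eC2 = False" using I(6) b assms by (simp add: hk_def)
  moreover have "interesting_f (inst k) (xv k j) eC3 = False" using I(10) b assms by (simp add: hk_def)
  moreover have "interesting_f (inst k) (xv k j) eA = (j < 2*k)" using I(2) by simp
  moreover have "interesting_f (inst k) (xv k j) eB2 = (0 < hk k j)" using I(8) hb2 by simp
  moreover have "interesting_f (inst k) (xv k j) eB3 = (0 < 2*k - j - hk k j)" using I(12) hb3 by simp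
  ultimately show ?thesis unfolding Uplus_def by (auto simp: EE_def)
qed

lemma Uplus_sub: "j \<le> 2*k \<Longrightarrow> Uplus (inst k) (xv k j) \<subseteq> {eA, eB2, eB3}"
  using Uplus_xv by auto

lemma Uplus_top: "Uplus (inst k) (xv k (2*k)) = {}"
  using Uplus_xv[of "2*k" k] by (simp add: hk_def)

lemma rarc_WF: "rarc I x (WV a) (FV b) \<Longrightarrow> a = b \<and> a \<in> Uplus I x" by (auto simp: rarc_def)
lemma rarc_FF: "rarc I x (FV a) (FV b) \<Longrightarrow> legal_fpair I x a b" by (auto simp: rarc_def)
lemma rarc_FW: "rarc I x (FV a) (WV b) \<Longrightarrow> a = b \<and> a \<in> Uminus I x" by (auto simp: rarc_def)
lemma rarc_WW: "rarc I x (WV a) (WV b) \<Longrightarrow> essential_wpair I x a b" by (auto simp: rarc_def)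

lemma UpUm: "e \<in> Uminus I x \<Longrightarrow> e \<notin> Uplus I x" by (simp add: Uminus_def Uplus_def)

lemma wpair_char: assumes "j \<le> 2*k" "essential_wpair (inst k) (xv k j) c a"
  shows "(c = eD \<and> a = eA) \<or> (c = eC2 \<and> a = eB2) \<or> (c = eC3 \<and> a = eB3)"
proof -
  have l: "c \<in> Uminus (inst k) (xv k j)" "a \<in> Uplus (inst k) (xv k j)" "fst a = fst c"
    using assms(2) by (auto simp: essential_wpair_def legal_wpair_def)
  have c: "c \<in> EE" "c \<notin> Uplus (inst k) (xv k j)" using l(1) UpUm[OF l(1)] by (auto simp: Uminus_def)
  have a: "a \<in> {eA, eB2, eB3}" using l(2) Uplus_sub[OF assms(1)] by auto
  show ?thesis using a c l(2,3) by (auto simp: EE_def)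
qed


definition par :: "nat \<Rightarrow> nat \<times> nat" where "par j = (if even j then eC2 else eC3)"

lemma unit_eq: assumes "x p \<ge> 1" "p \<noteq> a"
  shows "(\<forall>e. int (x e + unitv a e - unitv p e) = int (x e) + int (unitv a e) - int (unitv c e)) \<longleftrightarrow> c = p"
proof
  assume "\<forall>e. int (x e + unitv a e - unitv p e) = int (x e) + int (unitv a e) - int (unitv c e)"
  then have "int (x p + unitv a p - unitv p p) = int (x p) + int (unitv a p) - int (unitv c p)" by blast
  moreover have "unitv a p = 0" "unitv p p = 1" using assms by (auto simp: unitv_def)
  ultimately have "int (x p - 1) = int (x p) - int (unitv c p)" by simp
  then have "int (unitv c p) = 1" using assms(1) by (simp add: of_nat_diff)
  then show "c = p" by (simp add: unitv_def split: if_splits)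
next
  assume "c = p"
  show "\<forall>e. int (x e + unitv a e - unitv p e) = int (x e) + int (unitv a e) - int (unitv c e)"
  proof
    fix e
    show "int (x e + unitv a e - unitv p e) = int (x e) + int (unitv a e) - int (unitv c e)"
    proof (cases "e = p")
      case True
      then have "unitv a e = 0" "unitv p e = 1" "unitv c e = 1" using assms \<open>c = p\<close> by (auto simp: unitv_def)
      then show ?thesis using assms(1) True by (simp add: of_nat_diff)
    next
      case False
      then have "unitv p e = 0" "unitv c e = 0" using \<open>c = p\<close> by (auto simp: unitv_def)
      then show ?thesis by simp
    qed
  qed
qed

lemma fp_A: assumes "j < 2*k"
  shows "sp eA eC2 eC3 (2*k) (\<lambda>e. restr {eA,eC2,eC3} (xv k j) e + unitv eA e) =
         (\<lambda>e. restr {eA,eC2,eC3} (xv k j) e + unitv eA e - unitv (par j) e)"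
proof -
  define z where "z = (\<lambda>e. restr {eA,eC2,eC3} (xv k j) e + unitv eA e)"
  define y where "y = (\<lambda>e. restr {eA,eC2,eC3} (xv k j) e + unitv eA e - unitv (par j) e)"
  have Z: "\<forall>e. e \<notin> {eA,eC2,eC3} \<longrightarrow> sp eA eC2 eC3 (2*k) z e = 0" "\<forall>e. e \<notin> {eA,eC2,eC3} \<longrightarrow> y e = 0"
    unfolding y_def by (simp_all add: sp_def restr_def unitv_def)
  have "sp eA eC2 eC3 (2*k) z = y"
  proof (cases "even j")
    case True
    then obtain t where t: "j = 2*t" by (rule evenE)
    have tk: "t < k" using assms t by simp
    have zv: "z eA = 2*t+1" "z eC2 = k - t" "z eC3 = k - t" unfolding z_def
      using t tk by (simp_all add: restr_def unitv_def hk_even)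
    have yv: "y eA = 2*t+1" "y eC2 = k - t - 1" "y eC3 = k - t" unfolding y_def
      using t tk True by (simp_all add: restr_def unitv_def hk_even par_def)
    have m: "min (Suc (2*t)) (2*k) = Suc (2*t)" using tk by simp
    have r: "(2*k - Suc (2*t)) div 2 = k - Suc t" "2*k - Suc (2*t + (k - Suc t)) = k - t" using tk by presburger+
    have bq: "balq (k - Suc t) (k - t) (k - t) (k - t) = k - Suc t" "bals (k - Suc t) (k - t) (k - t) (k - t) = k - t"
      using tk by (simp_all add: balq_def bals_def)
    show ?thesis
      apply (subst eq3[OF Z])
      unfolding sp_def by (simp add: zv yv m r bq)
  next
    case False
    then obtain t where t: "j = 2*t+1" by (rule oddE)
    have tk: "t < k" using assms t by simp
    have zv: "z eA = 2*t+2" "z eC2 = k - t - 1" "z eC3 = k - t" unfolding z_def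
      using t tk by (simp_all add: restr_def unitv_def hk_odd')
    have yv: "y eA = 2*t+2" "y eC2 = k - t - 1" "y eC3 = k - t - 1" unfolding y_def
      using t tk False by (simp_all add: restr_def unitv_def hk_odd' par_def)
    have m: "min (Suc (Suc (2*t))) (2*k) = Suc (Suc (2*t))" using tk by simp
    have r: "(2*k - Suc (Suc (2*t))) div 2 = k - Suc t" "2*k - Suc (Suc (2*t + (k - Suc t))) = k - Suc t" using tk by presburger+
    have bq: "balq (k - Suc t) (k - Suc t) (k - Suc t) (k - t) = k - Suc t" "bals (k - Suc t) (k - Suc t) (k - Suc t) (k - t) = k - Suc t"
      using tk by (simp_all add: balq_def bals_def)
    show ?thesis
      apply (subst eq3[OF Z])
      unfolding sp_def by (simp add: zv yv m r bq)
  qed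
  then show ?thesis unfolding z_def y_def .
qed


lemma prio3_stepq: assumes "distinct [p,q,s]" "z p = b2" "z q = b3 + 1" "z s = d" "b2 + b3 + d = Q" "d \<ge> 1"
  shows "prio3 p q s Q z p = b2 \<and> prio3 p q s Q z q = b3 + 1 \<and> prio3 p q s Q z s = d - 1"
  using assms by (auto simp: prio3_def min_def)

lemma prio3_stepp: assumes "distinct [p,q,s]" "z p = b2 + 1" "z q = b3" "z s = d" "b2 + b3 + d = Q" "d \<ge> 1"
  shows "prio3 p q s Q z p = b2 + 1 \<and> prio3 p q s Q z q = b3 \<and> prio3 p q s Q z s = d - 1"
  using assms by (auto simp: prio3_def min_def)

lemma xv_sumB: "j \<le> 2*k \<Longrightarrow> (k - hk k j) + (k - (2*k - j - hk k j)) = j"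
  using hk_bounds[of k j] hk_mono[of j j k] by linarith

lemma fp_B: assumes "j < 2*k" "bb = eB2 \<or> bb = eB3"
  shows "prio3 eB2 eB3 eD (2*k) (\<lambda>e. restr {eB2,eB3,eD} (xv k j) e + unitv bb e) =
         (\<lambda>e. restr {eB2,eB3,eD} (xv k j) e + unitv bb e - unitv eD e)"
proof -
  define z where "z = (\<lambda>e. restr {eB2,eB3,eD} (xv k j) e + unitv bb e)"
  define y where "y = (\<lambda>e. restr {eB2,eB3,eD} (xv k j) e + unitv bb e - unitv eD e)"
  have Z: "\<forall>e. e \<notin> {eB2,eB3,eD} \<longrightarrow> prio3 eB2 eB3 eD (2*k) z e = 0" "\<forall>e. e \<notin> {eB2,eB3,eD} \<longrightarrow> y e = 0"
    unfolding y_def using assms(2) by (auto simp: prio3_def restr_def unitv_def)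
  have sB: "(k - hk k j) + (k - (2*k - j - hk k j)) + (2*k - j) = 2*k" using xv_sumB[of j k] assms by simp
  have d1: "2*k - j \<ge> 1" using assms by simp
  have "prio3 eB2 eB3 eD (2*k) z = y"
  proof (cases "bb = eB2")
    case True
    have zv: "z eB2 = (k - hk k j) + 1" "z eB3 = k - (2*k - j - hk k j)" "z eD = 2*k - j"
      unfolding z_def using True by (simp_all add: restr_def unitv_def)
    have yv: "y eB2 = (k - hk k j) + 1" "y eB3 = k - (2*k - j - hk k j)" "y eD = 2*k - j - 1"
      unfolding y_def using True by (simp_all add: restr_def unitv_def)
    show ?thesis using prio3_stepp[OF d2(2) zv sB d1] yv by (subst eq3[OF Z]) simp
  next
    case False
    then have F: "bb = eB3" using assms(2) by simp
    have zv: "z eB2 = (k - hk k j)" "z eB3 = k - (2*k - j - hk k j) + 1" "z eD = 2*k - j"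
      unfolding z_def using F by (simp_all add: restr_def unitv_def)
    have yv: "y eB2 = (k - hk k j)" "y eB3 = k - (2*k - j - hk k j) + 1" "y eD = 2*k - j - 1"
      unfolding y_def using F by (simp_all add: restr_def unitv_def)
    show ?thesis using prio3_stepq[OF d2(2) zv sB d1] yv by (subst eq3[OF Z]) simp
  qed
  then show ?thesis unfolding z_def y_def .
qed


lemma par_pos: assumes "j < 2*k" shows "xv k j (par j) \<ge> 1"
proof (cases "even j")
  case True
  then obtain t where t: "j = 2*t" by (rule evenE)
  then show ?thesis using assms True by (simp add: par_def hk_even)
next
  case False
  then obtain t where t: "j = 2*t+1" by (rule oddE)
  then show ?thesis using assms False by (simp add: par_def hk_odd')
qed

lemma par_in: "par j \<in> {eC2, eC3}" by (simp add: par_def)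

lemma fpair_A: assumes "j < 2*k"
  shows "legal_fpair (inst k) (xv k j) eA c \<longleftrightarrow> c = par j"
proof -
  have up: "eA \<in> Uplus (inst k) (xv k j)" using Uplus_xv[of j k] assms by simp
  have pp: "restr {eA,eC2,eC3} (xv k j) (par j) \<ge> 1" using par_pos[OF assms] par_in[of j] by (auto simp: restr_def)
  have pa: "par j \<noteq> eA" using par_in[of j] by auto
  have "legal_fpair (inst k) (xv k j) eA c \<longleftrightarrow> c \<in> {eA,eC2,eC3} \<and> c \<noteq> eA \<and>
     (\<forall>e. int (restr {eA,eC2,eC3} (xv k j) e + unitv eA e - unitv (par j) e) = int (restr {eA,eC2,eC3} (xv k j) e) + int (unitv eA e) - int (unitv c e))"
    unfolding legal_fpair_def using up fp_A[OF assms] by (simp add: Ef1)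
  also have "\<dots> \<longleftrightarrow> c = par j" unfolding unit_eq[of "restr {eA,eC2,eC3} (xv k j)" "par j" eA c, OF pp pa] using par_in[of j] by auto
  finally show ?thesis .
qed

lemma fpair_B: assumes "j < 2*k" "bb = eB2 \<or> bb = eB3" "bb \<in> Uplus (inst k) (xv k j)"
  shows "legal_fpair (inst k) (xv k j) bb c \<longleftrightarrow> c = eD"
proof -
  have pp: "restr {eB2,eB3,eD} (xv k j) eD \<ge> 1" using assms by (simp add: restr_def)
  have pa: "eD \<noteq> bb" using assms by auto
  have sb: "snd bb = 3" using assms(2) by auto
  have "legal_fpair (inst k) (xv k j) bb c \<longleftrightarrow> c \<in> {eB2,eB3,eD} \<and> c \<noteq> bb \<and>
     (\<forall>e. int (restr {eB2,eB3,eD} (xv k j) e + unitv bb e - unitv eD e) = int (restr {eB2,eB3,eD} (xv k j) e) + int (unitv bb e) - int (unitv c e))"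
    unfolding legal_fpair_def using assms(3) fp_B[OF assms(1,2)] by (simp add: Ef2 sb)
  also have "\<dots> \<longleftrightarrow> c = eD" unfolding unit_eq[of "restr {eB2,eB3,eD} (xv k j)" eD bb c, OF pp pa] using assms(2) by auto
  finally show ?thesis .
qed

lemma fpair_char: assumes "j < 2*k" "legal_fpair (inst k) (xv k j) a c"
  shows "(a = eA \<and> c = par j) \<or> (a = eB2 \<and> c = eD) \<or> (a = eB3 \<and> c = eD)"
proof -
  have "a \<in> Uplus (inst k) (xv k j)" using assms(2) by (simp add: legal_fpair_def)
  then have a: "a \<in> {eA, eB2, eB3}" "a \<in> Uplus (inst k) (xv k j)" using Uplus_sub[of j k] assms(1) by auto
  then consider "a = eA" | "a = eB2" | "a = eB3" by auto
  then show ?thesis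
  proof cases
    case 1 then show ?thesis using fpair_A[OF assms(1)] assms(2) by auto
  next
    case 2 then show ?thesis using fpair_B[OF assms(1) _ a(2)] assms(2) by auto
  next
    case 3 then show ?thesis using fpair_B[OF assms(1) _ a(2)] assms(2) by auto
  qed
qed


lemma dist_pairs: "distinct (concat (map (\<lambda>(a,c). [a,c]) R)) \<Longrightarrow> distinct (map fst R) \<and> distinct (map snd R)"
proof (induction R)
  case Nil then show ?case by simp
next
  case (Cons r R)
  obtain a c where r: "r = (a,c)" by (cases r)
  have s: "set (concat (map (\<lambda>(a,c). [a,c]) R)) = fst ` set R \<union> snd ` set R"
    by (induction R) auto
  show ?case using Cons r s by auto
qed

lemma len3: "length R = 3 \<Longrightarrow> \<exists>r0 r1 r2. R = [r0,r1,r2]"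
  by (cases R; simp; rename_tac R'; case_tac R'; simp; rename_tac R''; case_tac R''; simp)
lemma len2: "length R = 2 \<Longrightarrow> \<exists>r0 r1. R = [r0,r1]"
  by (cases R; simp; rename_tac R'; case_tac R'; simp)
lemma len1: "length R = 1 \<Longrightarrow> \<exists>r0. R = [r0]"
  by (cases R; simp)

lemma cyc: assumes "distinct [A,B,B',C,D]" "R \<noteq> []" "distinct (concat (map (\<lambda>(a,c). [a,c]) R))"
  "\<forall>i<length R. R!i \<in> {(A,C),(B,D),(B',D)}"
  "\<forall>i<length R. snd (R!i) = D \<longrightarrow> fst (R ! (Suc i mod length R)) = A"
  "\<forall>i<length R. snd (R!i) = C \<longrightarrow> fst (R ! (Suc i mod length R)) = B"
  shows "R = [(A,C),(B,D)] \<or> R = [(B,D),(A,C)]"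
proof -
  have d: "distinct (map fst R)" "distinct (map snd R)" using dist_pairs[OF assms(3)] by auto
  have sub: "set (map fst R) \<subseteq> {A,B,B'}" using assms(4) by (force simp: in_set_conv_nth)
  have "length R = card (set (map fst R))" using distinct_card[OF d(1)] by simp
  also have "\<dots> \<le> card {A,B,B'}" by (rule card_mono[OF _ sub]) simp
  also have "\<dots> \<le> 3" by (rule card_insert_le_m1) (auto simp: card_insert_if)
  finally have l3: "length R \<le> 3" .
  have "length R = 1 \<or> length R = 2 \<or> length R = 3" using l3 assms(2) by (cases "length R") auto
  then consider "length R = 1" | "length R = 2" | "length R = 3" by blast
  then show ?thesis
  proof cases
    case 1
    then obtain r0 where R: "R = [r0]" using len1 by blast
    show ?thesis using assms(1,4,5,6) unfolding R by auto
  next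
    case 2
    then obtain r0 r1 where R: "R = [r0,r1]" using len2 by blast
    have f: "r0 \<in> {(A,C),(B,D),(B',D)}" "r1 \<in> {(A,C),(B,D),(B',D)}" using assms(4) unfolding R by auto
    have g: "snd r0 = D \<longrightarrow> fst r1 = A" "snd r0 = C \<longrightarrow> fst r1 = B" "snd r1 = D \<longrightarrow> fst r0 = A" "snd r1 = C \<longrightarrow> fst r0 = B"
      using assms(5,6) unfolding R by (auto dest: spec[of _ 0] spec[of _ 1])
    show ?thesis using f g d assms(1) unfolding R by auto
  next
    case 3
    then obtain r0 r1 r2 where R: "R = [r0,r1,r2]" using len3 by blast
    have f: "r0 \<in> {(A,C),(B,D),(B',D)}" "r1 \<in> {(A,C),(B,D),(B',D)}" "r2 \<in> {(A,C),(B,D),(B',D)}"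
      using assms(4) unfolding R by (auto dest: spec[of _ 0] spec[of _ 1] spec[of _ 2])
    show ?thesis using f d assms(1) unfolding R by auto
  qed
qed


lemma rot2a: "rotate (Suc 0) [u,v] = [v,u]" by (simp add: rotate1_def)
lemma rot2b: "rotate n [u,v] = rotate (n mod 2) [u,v]"
proof -
  have "length [u,v] = 2" by simp
  then show ?thesis using rotate_conv_mod[of n "[u,v]"] by (simp only:)
qed
lemma rot2c: "rotate n [u,v] \<in> {[u,v],[v,u]}"
proof -
  have "n mod 2 = 0 \<or> n mod 2 = Suc 0" by auto
  then show ?thesis
  proof
    assume "n mod 2 = 0" then show ?thesis using rot2b[of n u v] by simp
  next
    assume "n mod 2 = Suc 0" then show ?thesis using rot2b[of n u v] rot2a[of u v] by simp
  qed
qed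

lemma rot2: "rot_class [u,v] = {[u,v],[v,u]}"
proof
  show "rot_class [u,v] \<subseteq> {[u,v],[v,u]}" unfolding rot_class_def
  proof
    fix y assume "y \<in> {rotate n [u, v] |n. True}"
    then obtain n where "y = rotate n [u,v]" by blast
    then show "y \<in> {[u,v],[v,u]}" using rot2c[of n u v] by simp
  qed
next
  have a: "\<exists>n. [u,v] = rotate n [u,v]" by (rule exI[of _ 0]) simp
  have b: "\<exists>n. [v,u] = rotate n [u,v]" by (rule exI[of _ "Suc 0"]) (simp only: rot2a)
  show "{[u,v],[v,u]} \<subseteq> rot_class [u,v]" unfolding rot_class_def using a b by blast
qed

definition Rj :: "nat \<Rightarrow> ((nat \<times> nat) \<times> (nat \<times> nat)) list" where
  "Rj j = (if even j then [(eA,eC2),(eB2,eD)] else [(eA,eC3),(eB3,eD)])"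

definition Bj :: "nat \<Rightarrow> nat \<times> nat" where "Bj j = (if even j then eB2 else eB3)"
definition Bj' :: "nat \<Rightarrow> nat \<times> nat" where "Bj' j = (if even j then eB3 else eB2)"

lemma Rj_eq: "Rj j = [(eA, par j), (Bj j, eD)]" by (simp add: Rj_def par_def Bj_def)

lemma rot_char: assumes "j \<le> 2*k" "is_rotation (inst k) (xv k j) R"
  shows "j < 2*k \<and> rot_class R = rot_class (Rj j)"
proof -
  let ?x = "xv k j"
  let ?n = "length R"
  have ne: "R \<noteq> []" and dist: "distinct (concat (map (\<lambda>(a, c). [a, c]) R))" using assms(2) by (auto simp: is_rotation_def)
  have arcs: "\<forall>i<?n. fst (R!i) \<in> Uplus (inst k) ?x \<and> legal_fpair (inst k) ?x (fst (R!i)) (snd (R!i)) \<and>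
      essential_wpair (inst k) ?x (snd (R!i)) (fst (R ! (Suc i mod ?n)))"
  proof (intro allI impI)
    fix i assume i: "i < ?n"
    have r: "rarc (inst k) ?x (WV (fst (R!i))) (FV (fst (R!i)))" "rarc (inst k) ?x (FV (fst (R!i))) (FV (snd (R!i)))"
      "rarc (inst k) ?x (WV (snd (R!i))) (WV (fst (R ! (Suc i mod ?n))))"
      using assms(2) i unfolding is_rotation_def by blast+
    show "fst (R!i) \<in> Uplus (inst k) ?x \<and> legal_fpair (inst k) ?x (fst (R!i)) (snd (R!i)) \<and>
      essential_wpair (inst k) ?x (snd (R!i)) (fst (R ! (Suc i mod ?n)))"
      using rarc_WF[OF r(1)] rarc_FF[OF r(2)] rarc_WW[OF r(3)] by blast
  qed
  have "fst (R!0) \<in> Uplus (inst k) ?x" using arcs ne by auto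
  then have jk: "j < 2*k" using Uplus_top[of k] assms(1) by (cases "j = 2*k") auto
  have P: "\<forall>i<?n. R!i \<in> {(eA, par j), (Bj j, eD), (Bj' j, eD)}"
  proof (intro allI impI)
    fix i assume "i < ?n"
    then have "legal_fpair (inst k) ?x (fst (R!i)) (snd (R!i))" using arcs by blast
    from fpair_char[OF jk this] show "R!i \<in> {(eA, par j), (Bj j, eD), (Bj' j, eD)}"
      by (cases "R!i") (auto simp: Bj_def Bj'_def)
  qed
  have S1: "\<forall>i<?n. snd (R!i) = eD \<longrightarrow> fst (R ! (Suc i mod ?n)) = eA"
  proof (intro allI impI)
    fix i assume i: "i < ?n" and e: "snd (R!i) = eD"
    then have "essential_wpair (inst k) ?x eD (fst (R ! (Suc i mod ?n)))" using arcs by metis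
    from wpair_char[OF assms(1) this] show "fst (R ! (Suc i mod ?n)) = eA" by auto
  qed
  have S2: "\<forall>i<?n. snd (R!i) = par j \<longrightarrow> fst (R ! (Suc i mod ?n)) = Bj j"
  proof (intro allI impI)
    fix i assume i: "i < ?n" and e: "snd (R!i) = par j"
    then have "essential_wpair (inst k) ?x (par j) (fst (R ! (Suc i mod ?n)))" using arcs by metis
    from wpair_char[OF assms(1) this] show "fst (R ! (Suc i mod ?n)) = Bj j" by (auto simp: par_def Bj_def split: if_splits)
  qed
  have dd: "distinct [eA, Bj j, Bj' j, par j, eD]" by (simp add: Bj_def Bj'_def par_def)
  have "R = [(eA, par j), (Bj j, eD)] \<or> R = [(Bj j, eD), (eA, par j)]"
    by (rule cyc[OF dd ne dist P S1 S2])
  then show ?thesis using jk by (auto simp: Rj_eq rot2)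
qed


lemma chi_Rj: "chi (Rj j) e = (if e = eA \<or> e = Bj j then 1 else if e = par j \<or> e = eD then -1 else 0)"
  by (auto simp: chi_def Rj_eq Bj_def par_def)

lemma shift_vals: "shifted x (Rj j) i = (\<lambda>e. nat (int (x e) + int i * chi (Rj j) e))"
  by (simp add: shifted_def)

lemma shift1: assumes "j < 2*k" shows "shifted (xv k j) (Rj j) 1 = xv k (Suc j)"
proof
  fix e
  show "shifted (xv k j) (Rj j) 1 e = xv k (Suc j) e"
  proof (cases "even j")
    case True
    then obtain t where t: "j = 2*t" by (rule evenE)
    have tk: "t < k" using assms t by simp
    have h1: "hk k (2*t) = k - t" "hk k (Suc (2*t)) = k - Suc t" using tk by (simp_all add: hk_even hk_odd')
    show ?thesis using tk True unfolding t shifted_def chi_Rj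
      by (auto simp: xv_def h1 Bj_def par_def)
  next
    case False
    then obtain t where t: "j = 2*t+1" by (rule oddE)
    have tk: "t < k" using assms t by simp
    have h1: "hk k (Suc (2*t)) = k - Suc t" "hk k (Suc (Suc (2*t))) = k - Suc t" using tk hk_odd'[OF tk] hk_even[of "Suc t" k]
      by simp_all
    show ?thesis using tk False unfolding t shifted_def chi_Rj
      by (auto simp: xv_def h1 Bj_def par_def)
  qed
qed


lemma shift_ok1: assumes "j < 2*k" shows "shift_ok (inst k) (xv k j) (Rj j) 1"
proof -
  have p: "xv k j (par j) \<ge> 1" using par_pos[OF assms] .
  have nn: "0 \<le> int (xv k j e) + int 1 * chi (Rj j) e" for e
    using p assms by (auto simp: chi_Rj)
  have "stable (inst k) (shifted (xv k j) (Rj j) 1)" using shift1[OF assms] xv_stable[of "Suc j" k] assms by simp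
  then show ?thesis unfolding shift_ok_def shifted_def using nn by blast
qed

lemma shift_not2: assumes "j < 2*k" shows "\<not> shift_ok (inst k) (xv k j) (Rj j) 2"
proof
  assume "shift_ok (inst k) (xv k j) (Rj j) 2"
  then have "stable (inst k) (shifted (xv k j) (Rj j) 2)" by (simp add: shift_ok_def shifted_def)
  then obtain m where m: "m \<le> 2*k" "shifted (xv k j) (Rj j) 2 = xv k m" using stable_iff by blast
  have mA: "m = j + 2" using fun_cong[OF m(2), of eA] by (simp add: shifted_def chi_Rj)
  show False
  proof (cases "even j")
    case True
    then obtain t where t: "j = 2*t" by (rule evenE)
    have tk: "t + 1 \<le> k" using m mA t by simp
    have "shifted (xv k j) (Rj j) 2 eC3 = xv k m eC3" using m(2) by simp
    moreover have "shifted (xv k j) (Rj j) 2 eC3 = k - t" using True tk unfolding t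
      by (simp add: shifted_def chi_Rj Bj_def par_def hk_even)
    moreover have "xv k m eC3 = k - t - 1"
    proof -
      have mm: "m = Suc (Suc (2*t))" using mA t by simp
      have hh: "hk k (Suc (Suc (2*t))) = k - Suc t" using hk_even[of "Suc t" k] tk by simp
      show ?thesis unfolding mm using hh tk by simp
    qed
    ultimately show False using tk by simp
  next
    case False
    then obtain t where t: "j = 2*t+1" by (rule oddE)
    have tk: "t + 2 \<le> k" using m mA t by simp
    have "shifted (xv k j) (Rj j) 2 eC2 = xv k m eC2" using m(2) by simp
    moreover have "shifted (xv k j) (Rj j) 2 eC2 = k - t - 1" using False tk unfolding t
      by (simp add: shifted_def chi_Rj Bj_def par_def hk_odd')
    moreover have "xv k m eC2 = k - t - 2"
    proof -
      have mm: "m = Suc (Suc (Suc (2*t)))" using mA t by simp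
      have hh: "hk k (Suc (Suc (Suc (2*t)))) = k - Suc (Suc t)" using hk_odd'[of "Suc t" k] tk by simp
      show ?thesis unfolding mm using hh tk by simp
    qed
    ultimately show False using tk by simp
  qed
qed

lemma tau1: assumes "j < 2*k" shows "tau (inst k) (xv k j) (Rj j) = 1"
  unfolding tau_def
proof (rule Greatest_equality)
  show "\<forall>i\<in>{1..1}. shift_ok (inst k) (xv k j) (Rj j) i" using shift_ok1[OF assms] by simp
next
  fix y assume "\<forall>i\<in>{1..y}. shift_ok (inst k) (xv k j) (Rj j) i"
  then show "y \<le> 1" using shift_not2[OF assms]
  proof -
    assume a: "\<forall>i\<in>{1..y}. shift_ok (inst k) (xv k j) (Rj j) i"
    show "y \<le> 1"
    proof (rule ccontr)
      assume "\<not> y \<le> 1"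
      then have "(2::nat) \<in> {1..y}" by auto
      then show False using a shift_not2[OF assms] by blast
    qed
  qed
qed


lemma Bj_up: assumes "j < 2*k" shows "Bj j \<in> Uplus (inst k) (xv k j)"
proof (cases "even j")
  case True
  then obtain t where t: "j = 2*t" by (rule evenE)
  then show ?thesis using Uplus_xv[of j k] assms True by (simp add: Bj_def hk_even)
next
  case False
  then obtain t where t: "j = 2*t+1" by (rule oddE)
  then show ?thesis using Uplus_xv[of j k] assms False by (simp add: Bj_def hk_odd')
qed

lemma A_up: "j < 2*k \<Longrightarrow> eA \<in> Uplus (inst k) (xv k j)" using Uplus_xv[of j k] by simp

lemma par_um: assumes "j < 2*k" shows "par j \<in> Uminus (inst k) (xv k j)"
proof -
  have n: "par j \<notin> Uplus (inst k) (xv k j)" using Uplus_sub[of j k] assms par_in[of j] by auto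
  have "par j \<in> EE" using par_in[of j] by (auto simp: EE_def)
  then show ?thesis using n par_pos[OF assms] unfolding Uminus_def Uplus_def by auto
qed

lemma D_um: assumes "j < 2*k" shows "eD \<in> Uminus (inst k) (xv k j)"
proof -
  have n: "eD \<notin> Uplus (inst k) (xv k j)" using Uplus_sub[of j k] assms by auto
  have "eD \<in> EE" by (auto simp: EE_def)
  then show ?thesis using n assms unfolding Uminus_def Uplus_def by auto
qed

lemma ess_intro: assumes "j \<le> 2*k" "c \<in> Uminus (inst k) (xv k j)" "a \<in> Uplus (inst k) (xv k j)" "fst a = fst c"
  "acceptable (Ew (inst k) (fst c)) (capk k) (chWk k (fst c))
       (\<lambda>e. restr (Ew (inst k) (fst c)) (xv k j) e + unitv a e - unitv c e)"
  shows "essential_wpair (inst k) (xv k j) c a"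
proof -
  have "\<not> (\<exists>d \<in> Uplus (inst k) (xv k j). fst d = fst c \<and> d \<noteq> a)"
  proof
    assume "\<exists>d \<in> Uplus (inst k) (xv k j). fst d = fst c \<and> d \<noteq> a"
    then obtain d where d: "d \<in> Uplus (inst k) (xv k j)" "fst d = fst c" "d \<noteq> a" by blast
    have "d \<in> {eA, eB2, eB3}" "a \<in> {eA, eB2, eB3}" using Uplus_sub[OF assms(1)] d(1) assms(3) by auto
    then show False using d(2,3) assms(4) by (auto simp del: One_nat_def)
  qed
  then have nex: "\<not> (\<exists>d \<in> Uplus (inst k) (xv k j). fst d = fst c \<and> d \<noteq> a \<and>
          interesting (Ew (inst k) (fst c)) (cap (inst k)) (chW (inst k) (fst c))
            (\<lambda>e. restr (Ew (inst k) (fst c)) (xv k j) e + unitv a e - unitv c e) d)" by blast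
  have "legal_wpair (inst k) (xv k j) c a" unfolding legal_wpair_def using assms(2-5) by simp
  then show ?thesis unfolding essential_wpair_def using nex by blast
qed


lemma acc_DA: assumes "j < 2*k"
  shows "acceptable (Ew (inst k) (fst eD)) (capk k) (chWk k (fst eD)) (\<lambda>e. restr (Ew (inst k) (fst eD)) (xv k j) e + unitv eA e - unitv eD e)"
proof -
  let ?z = "\<lambda>e. restr {eD, eA} (xv k j) e + unitv eA e - unitv eD e"
  have v: "?z \<in> vbox {eD, eA} (capk k)" using assms by (auto simp: vbox_def restr_def unitv_def)
  have "acceptable {eD, eA} (capk k) (prio2 eD eA (2*k)) ?z"
    unfolding prio2_acc[OF d2(3) v] using assms by (simp add: restr_def unitv_def)
  then show ?thesis by (simp add: Ew1)
qed

lemma acc_CB: assumes "j < 2*k"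
  shows "acceptable (Ew (inst k) (fst (par j))) (capk k) (chWk k (fst (par j))) (\<lambda>e. restr (Ew (inst k) (fst (par j))) (xv k j) e + unitv (Bj j) e - unitv (par j) e)"
proof (cases "even j")
  case True
  then obtain t where t: "j = 2*t" by (rule evenE)
  have tk: "t < k" using assms t by simp
  let ?z = "\<lambda>e. restr {eC2, eB2} (xv k j) e + unitv eB2 e - unitv eC2 e"
  have v: "?z \<in> vbox {eC2, eB2} (capk k)" using tk True unfolding t by (auto simp: vbox_def restr_def unitv_def hk_even)
  have "acceptable {eC2, eB2} (capk k) (prio2 eC2 eB2 k) ?z"
    unfolding prio2_acc[OF d2(4) v] using tk unfolding t by (simp add: restr_def unitv_def hk_even)
  then show ?thesis using True by (simp add: Ew2 par_def Bj_def)
next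
  case False
  then obtain t where t: "j = 2*t+1" by (rule oddE)
  have tk: "t < k" using assms t by simp
  let ?z = "\<lambda>e. restr {eC3, eB3} (xv k j) e + unitv eB3 e - unitv eC3 e"
  have v: "?z \<in> vbox {eC3, eB3} (capk k)" using tk False unfolding t by (auto simp: vbox_def restr_def unitv_def hk_odd')
  have "acceptable {eC3, eB3} (capk k) (prio2 eC3 eB3 k) ?z"
    unfolding prio2_acc[OF d2(5) v] using tk unfolding t by (simp add: restr_def unitv_def hk_odd')
  then show ?thesis using False by (simp add: Ew3 par_def Bj_def)
qed


lemma rarc_i1: "a \<in> Uplus I x \<Longrightarrow> rarc I x (WV a) (FV a)" by (auto simp: rarc_def rverts_def)
lemma rarc_i2: "legal_fpair I x a c \<Longrightarrow> a \<in> Uplus I x \<union> Uminus I x \<Longrightarrow> c \<in> Uplus I x \<union> Uminus I x \<Longrightarrow> rarc I x (FV a) (FV c)"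
  unfolding rarc_def rverts_def by blast
lemma rarc_i3: "c \<in> Uminus I x \<Longrightarrow> rarc I x (FV c) (WV c)" by (auto simp: rarc_def rverts_def)
lemma rarc_i4: "essential_wpair I x c a \<Longrightarrow> a \<in> Uplus I x \<union> Uminus I x \<Longrightarrow> c \<in> Uplus I x \<union> Uminus I x \<Longrightarrow> rarc I x (WV c) (WV a)"
  unfolding rarc_def rverts_def by blast

lemma fst_par: "fst (par j) = fst (Bj j)" by (simp add: par_def Bj_def)

lemma Rj_rot: assumes "j < 2*k" shows "is_rotation (inst k) (xv k j) (Rj j)"
proof -
  let ?x = "xv k j"
  have jk: "j \<le> 2*k" using assms by simp
  have u: "eA \<in> Uplus (inst k) ?x" "Bj j \<in> Uplus (inst k) ?x" "par j \<in> Uminus (inst k) ?x" "eD \<in> Uminus (inst k) ?x"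
    using A_up[OF assms] Bj_up[OF assms] par_um[OF assms] D_um[OF assms] by auto
  have f1: "legal_fpair (inst k) ?x eA (par j)" using fpair_A[OF assms] by simp
  have f2: "legal_fpair (inst k) ?x (Bj j) eD" using fpair_B[OF assms _ u(2)] by (simp add: Bj_def)
  have w1: "essential_wpair (inst k) ?x (par j) (Bj j)"
    by (rule ess_intro[OF jk u(3) u(2) fst_par[symmetric]]) (rule acc_CB[OF assms])
  have w2: "essential_wpair (inst k) ?x eD eA"
    by (rule ess_intro[OF jk u(4) u(1)]) (simp, rule acc_DA[OF assms])
  have r: "rarc (inst k) ?x (WV eA) (FV eA)" "rarc (inst k) ?x (FV eA) (FV (par j))"
     "rarc (inst k) ?x (FV (par j)) (WV (par j))" "rarc (inst k) ?x (WV (par j)) (WV (Bj j))"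
     "rarc (inst k) ?x (WV (Bj j)) (FV (Bj j))" "rarc (inst k) ?x (FV (Bj j)) (FV eD)"
     "rarc (inst k) ?x (FV eD) (WV eD)" "rarc (inst k) ?x (WV eD) (WV eA)"
    using rarc_i1 rarc_i2 rarc_i3 rarc_i4 u f1 f2 w1 w2 by blast+
  have d: "distinct [eA, par j, Bj j, eD]" by (simp add: par_def Bj_def)
  let ?R = "[(eA, par j), (Bj j, eD)]"
  have "\<forall>i<length ?R. rarc (inst k) ?x (WV (fst (?R ! i))) (FV (fst (?R ! i))) \<and>
        rarc (inst k) ?x (FV (fst (?R ! i))) (FV (snd (?R ! i))) \<and>
        rarc (inst k) ?x (FV (snd (?R ! i))) (WV (snd (?R ! i))) \<and>
        rarc (inst k) ?x (WV (snd (?R ! i))) (WV (fst (?R ! (Suc i mod length ?R))))"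
  proof (intro allI impI)
    fix i assume "i < length ?R"
    then have "i = 0 \<or> i = 1" by auto
    then show "rarc (inst k) ?x (WV (fst (?R ! i))) (FV (fst (?R ! i))) \<and>
        rarc (inst k) ?x (FV (fst (?R ! i))) (FV (snd (?R ! i))) \<and>
        rarc (inst k) ?x (FV (snd (?R ! i))) (WV (snd (?R ! i))) \<and>
        rarc (inst k) ?x (WV (snd (?R ! i))) (WV (fst (?R ! (Suc i mod length ?R))))"
      using r by (elim disjE) simp_all
  qed
  then show ?thesis unfolding is_rotation_def using xv_stable[OF jk] d by (simp add: Rj_eq)
qed


lemma class_chi: assumes "rot_class R = rot_class R'" shows "chi R = chi R'"
proof -
  have "R \<in> rot_class R" unfolding rot_class_def by (metis (mono_tags, lifting) mem_Collect_eq rotate0 id_apply)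
  then have "R \<in> rot_class R'" using assms by simp
  then obtain n where "R = rotate n R'" unfolding rot_class_def by blast
  then have s: "set R = set R'" by simp
  show ?thesis unfolding chi_def s by (rule refl)
qed

lemma tau_chi: "chi R = chi R' \<Longrightarrow> tau I x R = tau I x R'"
  unfolding tau_def shift_ok_def by simp
lemma shifted_chi: "chi R = chi R' \<Longrightarrow> shifted x R i = shifted x R' i"
  unfolding shifted_def by simp

lemma route_char: assumes "full_route (inst k) xs Rs"
  shows "length Rs = 2*k \<and> (\<forall>i<length Rs. rot_class (Rs!i) = rot_class (Rj i))"
proof -
  have len: "length xs = Suc (length Rs)" and x0: "is_xmin (inst k) (xs!0)" and xl: "is_xmax (inst k) (last xs)"
    and st: "\<forall>i<length Rs. is_rotation (inst k) (xs!i) (Rs!i) \<and> xs ! Suc i = shifted (xs!i) (Rs!i) (tau (inst k) (xs!i) (Rs!i))"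
    using assms unfolding full_route_def by auto
  have key: "i \<le> length Rs \<Longrightarrow> xs!i = xv k i \<and> i \<le> 2*k \<and> (\<forall>m<i. rot_class (Rs!m) = rot_class (Rj m))" for i
  proof (induction i)
    case 0 then show ?case using x0 is_xmin_iff by simp
  next
    case (Suc i)
    then have IH: "xs!i = xv k i" "i \<le> 2*k" "\<forall>m<i. rot_class (Rs!m) = rot_class (Rj m)" and il: "i < length Rs" by auto
    have rot: "is_rotation (inst k) (xv k i) (Rs!i)" using st il IH(1) by auto
    from rot_char[OF IH(2) rot] have ik: "i < 2*k" and cl: "rot_class (Rs!i) = rot_class (Rj i)" by auto
    have ch: "chi (Rs!i) = chi (Rj i)" using class_chi[OF cl] .
    have "xs ! Suc i = shifted (xv k i) (Rs!i) (tau (inst k) (xv k i) (Rs!i))" using st il IH(1) by auto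
    also have "\<dots> = shifted (xv k i) (Rj i) (tau (inst k) (xv k i) (Rj i))" using tau_chi[OF ch] shifted_chi[OF ch] by simp
    also have "\<dots> = xv k (Suc i)" using tau1[OF ik] shift1[OF ik] by simp
    finally show ?case using ik IH(3) cl less_Suc_eq by auto
  qed
  from key[of "length Rs"] have a: "xs ! length Rs = xv k (length Rs)" "length Rs \<le> 2*k"
     "\<forall>m<length Rs. rot_class (Rs!m) = rot_class (Rj m)" by auto
  have ne: "xs \<noteq> []" using len by auto
  have "last xs = xs ! length Rs" using last_conv_nth[OF ne] len by simp
  then have "xv k (length Rs) = xv k (2*k)" using xl a(1) is_xmax_iff by simp
  then have "length Rs = 2*k" by (rule xv_inj)
  then show ?thesis using a(3) by simp
qed

definition xsk :: "nat \<Rightarrow> (nat \<times> nat \<Rightarrow> nat) list" where "xsk k = map (xv k) [0..<Suc (2*k)]"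
definition Rsk :: "nat \<Rightarrow> ((nat \<times> nat) \<times> (nat \<times> nat)) list list" where "Rsk k = map Rj [0..<2*k]"

lemma route_ex: "full_route (inst k) (xsk k) (Rsk k)"
proof -
  have l: "last (xsk k) = xv k (2*k)" unfolding xsk_def by (simp del: upt_Suc add: upt_Suc_append)
  have "\<forall>i<length (Rsk k). is_rotation (inst k) (xsk k ! i) (Rsk k ! i) \<and>
        xsk k ! Suc i = shifted (xsk k ! i) (Rsk k ! i) (tau (inst k) (xsk k ! i) (Rsk k ! i))"
  proof (intro allI impI)
    fix i assume "i < length (Rsk k)"
    then have i: "i < 2*k" by (simp add: Rsk_def)
    have e: "xsk k ! i = xv k i" "xsk k ! Suc i = xv k (Suc i)" "Rsk k ! i = Rj i"
      using i by (simp_all add: xsk_def Rsk_def nth_map del: upt_Suc)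
    show "is_rotation (inst k) (xsk k ! i) (Rsk k ! i) \<and>
        xsk k ! Suc i = shifted (xsk k ! i) (Rsk k ! i) (tau (inst k) (xsk k ! i) (Rsk k ! i))"
      unfolding e using Rj_rot[OF i] tau1[OF i] shift1[OF i] by simp
  qed
  moreover have "xsk k ! 0 = xv k 0" by (simp add: xsk_def del: upt_Suc)
  ultimately show ?thesis unfolding full_route_def using l is_xmin_iff is_xmax_iff
    by (simp add: xsk_def Rsk_def del: upt_Suc)
qed


definition C0 :: "((nat \<times> nat) \<times> (nat \<times> nat)) list set" where "C0 = rot_class (Rj 0)"
definition C1 :: "((nat \<times> nat) \<times> (nat \<times> nat)) list set" where "C1 = rot_class (Rj 1)"

lemma class_Rj: "rot_class (Rj i) = (if even i then C0 else C1)"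
  by (simp add: C0_def C1_def Rj_def)

lemma C01: "C0 \<noteq> C1"
proof
  assume e: "C0 = C1"
  have "[(eA, eC2), (eB2, eD)] \<in> C0" by (simp add: C0_def Rj_def rot2)
  then have "[(eA, eC2), (eB2, eD)] \<in> C1" using e by simp
  then show False by (simp add: C1_def Rj_def rot2)
qed

lemma card_even: "card {i. i < 2*k \<and> even i} = k"
proof -
  have "{i. i < 2*k \<and> even i} = (\<lambda>t. 2*t) ` {..<k}" by (auto elim!: evenE)
  moreover have "inj_on (\<lambda>t::nat. 2*t) {..<k}" by (auto simp: inj_on_def)
  ultimately show ?thesis by (simp add: card_image)
qed

lemma card_odd: "card {i. i < 2*k \<and> \<not> even i} = k"
proof -
  have "{i. i < 2*k \<and> \<not> even i} = (\<lambda>t. 2*t+1) ` {..<k}" by (auto elim!: oddE)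
  moreover have "inj_on (\<lambda>t::nat. 2*t+1) {..<k}" by (auto simp: inj_on_def)
  ultimately show ?thesis by (simp add: card_image)
qed

lemma cnt: assumes "full_route (inst k) xs Rs"
  shows "card {i. i < length Rs \<and> rot_class (Rs!i) = X} = (if X = C0 \<or> X = C1 then k else 0)"
proof -
  from route_char[OF assms] have l: "length Rs = 2*k" and c: "\<forall>i<length Rs. rot_class (Rs!i) = rot_class (Rj i)" by auto
  have "{i. i < length Rs \<and> rot_class (Rs!i) = X} = {i. i < 2*k \<and> (if even i then C0 else C1) = X}"
    using l c class_Rj C01 by auto
  also have "\<dots> = (if X = C0 then {i. i < 2*k \<and> even i} else if X = C1 then {i. i < 2*k \<and> \<not> even i} else {})"
    using C01 by auto
  finally show ?thesis using card_even card_odd C01 by auto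
qed

lemma rot_poset_eq: "rot_poset (inst k) = {C0, C1} \<times> {1..k}"
proof
  show "rot_poset (inst k) \<subseteq> {C0, C1} \<times> {1..k}"
  proof
    fix p assume "p \<in> rot_poset (inst k)"
    then obtain R j xs Rs where p: "p = (rot_class R, j)" and r: "full_route (inst k) xs Rs" "1 \<le> j"
      "j \<le> card {i. i < length Rs \<and> rot_class (Rs ! i) = rot_class R}"
      unfolding rot_poset_def by blast
    show "p \<in> {C0, C1} \<times> {1..k}" using r cnt[OF r(1), where X="rot_class R"] p by (auto split: if_splits)
  qed
next
  show "{C0, C1} \<times> {1..k} \<subseteq> rot_poset (inst k)"
  proof
    fix p assume "p \<in> {C0, C1} \<times> {1..k}"
    then obtain X j where p: "p = (X, j)" "X \<in> {C0, C1}" "1 \<le> j" "j \<le> k" by auto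
    obtain R where R: "X = rot_class R" using p(2) unfolding C0_def C1_def by auto
    have "j \<le> card {i. i < length (Rsk k) \<and> rot_class (Rsk k ! i) = rot_class R}"
      using cnt[OF route_ex, where X="rot_class R"] R p by auto
    then show "p \<in> rot_poset (inst k)" unfolding rot_poset_def using route_ex p R by blast
  qed
qed

lemma card_rot_poset: "card (rot_poset (inst k)) = 2*k \<and> finite (rot_poset (inst k))"
  using C01 by (simp add: rot_poset_eq card_cartesian_product)

theorem corollary8p2:
  shows "\<exists>(W :: nat set) (F :: nat set) (E :: (nat \<times> nat) set).
           finite W \<and> finite F \<and> E \<subseteq> W \<times> F \<and>
           (\<exists>c1 c2 :: real. 0 < c1 \<and> c1 \<le> c2 \<and>
              (\<forall>N :: nat. \<exists>I :: (nat, nat) ginst.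
                  Wv I = W \<and> Fv I = F \<and> Ed I = E \<and> valid_instance I \<and>
                  N \<le> bmax I \<and> finite (rot_poset I) \<and>
                  c1 * real (bmax I) \<le> real (card (rot_poset I)) \<and>
                  real (card (rot_poset I)) \<le> c2 * real (bmax I)))"
proof -
  have A: "\<forall>N :: nat. \<exists>I :: (nat, nat) ginst.
                  Wv I = {2,3,4} \<and> Fv I = {2,3} \<and> Ed I = EE \<and> valid_instance I \<and>
                  N \<le> bmax I \<and> finite (rot_poset I) \<and>
                  1 * real (bmax I) \<le> real (card (rot_poset I)) \<and>
                  real (card (rot_poset I)) \<le> 1 * real (bmax I)"
  proof
    fix N :: nat
    let ?k = "max N 1"
    have k1: "?k \<ge> 1" by simp
    show "\<exists>I :: (nat, nat) ginst.
                  Wv I = {2,3,4} \<and> Fv I = {2,3} \<and> Ed I = EE \<and> valid_instance I \<and>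
                  N \<le> bmax I \<and> finite (rot_poset I) \<and>
                  1 * real (bmax I) \<le> real (card (rot_poset I)) \<and>
                  real (card (rot_poset I)) \<le> 1 * real (bmax I)"
      apply (rule exI[of _ "inst ?k"])
      using valid[of ?k] bmax_inst[OF k1] card_rot_poset[of ?k] by auto
  qed
  have B: "EE \<subseteq> {2,3,4} \<times> {2,3}" by (auto simp: EE_def)
  have C: "finite {2,3,4::nat}" "finite {2,3::nat}" "(0::real) < 1" "(1::real) \<le> 1" by simp_all
  show ?thesis using A B C by blast
qed

end
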